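(* Let $\Theta=\{1,2\}$, let $P_1,\dots,P_m$ be experiments, and let $(A,u)$ be a decision problem with $A=\{a_1,\dots,a_n\}$ satisfying: $u(1,a_1)<\cdots<u(1,a_n)$; $u(2,a_1)>\cdots>u(2,a_n)$; $u(\cdot,a_1)=(0,0)$; and no $a_i$ is weakly*-dominated (there is no $\alpha\in\Delta(A\setminus\{a_i\})$ with $u(\cdot,a_i)\le u(\cdot,\alpha)$ componentwise). Let $(A_1^*,u_1^* ),\dots,(A_{n-1}^*,u_{n-1}^* )$ be the canonical decomposition of $(A,u)$ and, for each $\ell$, let $\sigma_\ell^*:\mathbf Y\to\Delta(A_\ell^* )$ be robustly optimal for $(A_\ell^*,u_\ell^* )$. Then: (1) $V(P_1,\dots,P_m;(A,u))=\sum_{\ell=1}^{n-1}\max_{j=1,\dots,m}V(P_j;(A_\ell^*,u_\ell^* ))$; (2) there exists $\sigma^*:\mathbf Y\to\Delta(A)$ with $u(\sigma^*(\mathbf y))\ge\sum_{\ell=1}^{n-1}u_\ell^*(\sigma_\ell^*(\mathbf y))$ for all $\mathbf y\in\mathbf Y$, and every such $\sigma^*$ is robustly optimal for $(A,u)$.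
   Context: $\Theta$ is a finite set of states. A decision problem is a pair $(A,u)$ with $A$ a finite nonempty action set and $u:\Theta\times A\to\mathbb{R}$; for $\alpha\in\Delta(A)$ write $u(\theta,\alpha)=\sum_a\alpha(a)u(\theta,a)$ and $u(\alpha)=(u(\theta,\alpha))_{\theta}$; vector inequalities are componentwise. An experiment is a map $P:\Theta\to\Delta(Y)$ with $Y$ a finite signal set. Given experiments $P_j:\Theta\to\Delta(Y_j)$, $j=1,\dots,m$, let $\mathbf Y=Y_1\times\cdots\times Y_m$ and let $\mathcal P(P_1,\dots,P_m)$ be the set of experiments $P:\Theta\to\Delta(\mathbf Y)$ whose $j$-th marginal is $P_j(\cdot|\theta)$ for every $\theta$ and $j$. A strategy is a map $\sigma:\mathbf Y\to\Delta(A)$. Define $V(P_1,\dots,P_m;(A,u))=\max_{\sigma}\min_{P\in\mathcal P(P_1,\dots,P_m)}\sum_{\theta}\sum_{\mathbf y}P(\mathbf y|\theta)u(\theta,\sigma(\mathbf y))$, and call a maximizing $\sigma$ robustly optimal for $(A,u)$; for $m=1$, $V(P;(A,u))=\max_{\sigma:Y\to\Delta(A)}\sum_\theta\sum_y P(y|\theta)u(\theta,\sigma(y))$. For $(A,u)$ with actions ordered $a_1,\dots,a_n$ as in the claim, its canonical decomposition is the collection of $n-1$ binary-action problems $(A_\ell^*,u_\ell^* )$, $\ell=1,\dots,n-1$, with $A_\ell^*=\{0,1\}$, $u_\ell^*(\cdot,0)=(0,0)$ and $u_\ell^*(\cdot,1)=u(\cdot,a_{\ell+1})-u(\cdot,a_\ell)$.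 *)

theory Defs
  imports Main "HOL-Library.FuncSet" Complex_Main
begin

definition is_dist :: "'x set \<Rightarrow> ('x \<Rightarrow> real) \<Rightarrow> bool" where
  "is_dist S p \<longleftrightarrow> (\<forall>x\<in>S. 0 \<le> p x) \<and> sum p S = 1"

definition is_experiment :: "'s set \<Rightarrow> 'y set \<Rightarrow> ('s \<Rightarrow> 'y \<Rightarrow> real) \<Rightarrow> bool" where
  "is_experiment Th Y P \<longleftrightarrow> finite Y \<and> (\<forall>\<theta>\<in>Th. is_dist Y (P \<theta>))"

definition eu :: "'a set \<Rightarrow> ('s \<Rightarrow> 'a \<Rightarrow> real) \<Rightarrow> 's \<Rightarrow> ('a \<Rightarrow> real) \<Rightarrow> real" where
  "eu A u \<theta> \<alpha> = (\<Sum>a\<in>A. \<alpha> a * u \<theta> a)"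

(* signal profiles  Y_0 x ... x Y_(m-1)  (experiments indexed 0..m-1) *)
definition profiles :: "nat \<Rightarrow> (nat \<Rightarrow> 'y set) \<Rightarrow> (nat \<Rightarrow> 'y) set" where
  "profiles m Y = PiE {..<m} Y"

definition couplings ::
  "'s set \<Rightarrow> nat \<Rightarrow> (nat \<Rightarrow> 'y set) \<Rightarrow> (nat \<Rightarrow> 's \<Rightarrow> 'y \<Rightarrow> real)
     \<Rightarrow> ('s \<Rightarrow> (nat \<Rightarrow> 'y) \<Rightarrow> real) set" where
  "couplings Th m Y P = {Q. \<forall>\<theta>\<in>Th. is_dist (profiles m Y) (Q \<theta>) \<and>
      (\<forall>j<m. \<forall>yj\<in>Y j. (\<Sum>y\<in>{y\<in>profiles m Y. y j = yj}. Q \<theta> y) = P j \<theta> yj)}"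

definition strategies :: "'a set \<Rightarrow> (nat \<Rightarrow> 'y) set \<Rightarrow> ((nat \<Rightarrow> 'y) \<Rightarrow> 'a \<Rightarrow> real) set" where
  "strategies A YY = {\<sigma>. \<forall>y\<in>YY. is_dist A (\<sigma> y)}"

definition payoff ::
  "'s set \<Rightarrow> 'a set \<Rightarrow> ('s \<Rightarrow> 'a \<Rightarrow> real) \<Rightarrow> (nat \<Rightarrow> 'y) set
     \<Rightarrow> ('s \<Rightarrow> (nat \<Rightarrow> 'y) \<Rightarrow> real) \<Rightarrow> ((nat \<Rightarrow> 'y) \<Rightarrow> 'a \<Rightarrow> real) \<Rightarrow> real" where
  "payoff Th A u YY Q \<sigma> = (\<Sum>\<theta>\<in>Th. \<Sum>y\<in>YY. Q \<theta> y * eu A u \<theta> (\<sigma> y))"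

definition guarantee ::
  "'s set \<Rightarrow> 'a set \<Rightarrow> ('s \<Rightarrow> 'a \<Rightarrow> real) \<Rightarrow> nat \<Rightarrow> (nat \<Rightarrow> 'y set)
     \<Rightarrow> (nat \<Rightarrow> 's \<Rightarrow> 'y \<Rightarrow> real) \<Rightarrow> ((nat \<Rightarrow> 'y) \<Rightarrow> 'a \<Rightarrow> real) \<Rightarrow> real" where
  "guarantee Th A u m Y P \<sigma> =
     (INF Q\<in>couplings Th m Y P. payoff Th A u (profiles m Y) Q \<sigma>)"

definition Vrob ::
  "'s set \<Rightarrow> 'a set \<Rightarrow> ('s \<Rightarrow> 'a \<Rightarrow> real) \<Rightarrow> nat \<Rightarrow> (nat \<Rightarrow> 'y set)
     \<Rightarrow> (nat \<Rightarrow> 's \<Rightarrow> 'y \<Rightarrow> real) \<Rightarrow> real" where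
  "Vrob Th A u m Y P = (SUP \<sigma>\<in>strategies A (profiles m Y). guarantee Th A u m Y P \<sigma>)"

definition robustly_optimal ::
  "'s set \<Rightarrow> 'a set \<Rightarrow> ('s \<Rightarrow> 'a \<Rightarrow> real) \<Rightarrow> nat \<Rightarrow> (nat \<Rightarrow> 'y set)
     \<Rightarrow> (nat \<Rightarrow> 's \<Rightarrow> 'y \<Rightarrow> real) \<Rightarrow> ((nat \<Rightarrow> 'y) \<Rightarrow> 'a \<Rightarrow> real) \<Rightarrow> bool" where
  "robustly_optimal Th A u m Y P \<sigma> \<longleftrightarrow>
     \<sigma> \<in> strategies A (profiles m Y) \<and> guarantee Th A u m Y P \<sigma> = Vrob Th A u m Y P"

definition V1 ::
  "'s set \<Rightarrow> 'a set \<Rightarrow> ('s \<Rightarrow> 'a \<Rightarrow> real) \<Rightarrow> 'y set \<Rightarrow> ('s \<Rightarrow> 'y \<Rightarrow> real) \<Rightarrow> real" where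
  "V1 Th A u Y P = (SUP \<sigma>\<in>{\<sigma>. \<forall>y\<in>Y. is_dist A (\<sigma> y)}.
      \<Sum>\<theta>\<in>Th. \<Sum>y\<in>Y. P \<theta> y * eu A u \<theta> (\<sigma> y))"

(* canonical decomposition: binary problem l, actions {0,1},
   u*_l(.,0) = 0, u*_l(.,1) = u(.,a_(l+1)) - u(.,a_l) *)
definition ustar :: "('s \<Rightarrow> nat \<Rightarrow> real) \<Rightarrow> nat \<Rightarrow> 's \<Rightarrow> nat \<Rightarrow> real" where
  "ustar u l \<theta> a = (if a = 1 then u \<theta> (Suc l) - u \<theta> l else 0)"

definition weakly_star_dominated :: "'s set \<Rightarrow> 'a set \<Rightarrow> ('s \<Rightarrow> 'a \<Rightarrow> real) \<Rightarrow> 'a \<Rightarrow> bool" where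
  "weakly_star_dominated Th A u a \<longleftrightarrow>
     (\<exists>\<alpha>. is_dist (A - {a}) \<alpha> \<and> (\<forall>\<theta>\<in>Th. u \<theta> a \<le> eu (A - {a}) u \<theta> \<alpha>))"

end

theory Submission
  imports Defs
begin


definition callf :: "(nat \<Rightarrow> real) \<Rightarrow> nat \<Rightarrow> (nat \<Rightarrow> real) \<Rightarrow> real \<Rightarrow> real" where
  "callf g K w x = (\<Sum>i\<le>K. w i * max 0 (g i - x))"

locale grid =
  fixes g :: "nat \<Rightarrow> real" and K :: nat
  assumes gstep: "\<And>i. i < K \<Longrightarrow> g i < g (Suc i)"
begin

lemma gmono: "i < j \<Longrightarrow> j \<le> K \<Longrightarrow> g i < g j"
proof (induction j)
  case 0 then show ?case by simp
next
  case (Suc j)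
  then show ?case using gstep[of j]
    by (metis Suc_leD le_eq_less_or_eq less_Suc_eq_le less_trans_Suc order.strict_trans)
qed

lemma gmono_le: "i \<le> j \<Longrightarrow> j \<le> K \<Longrightarrow> g i \<le> g j"
  using gmono by (metis le_less order.refl)

lemma gmono_iff: "i \<le> K \<Longrightarrow> j \<le> K \<Longrightarrow> g i < g j \<longleftrightarrow> i < j"
  using gmono by (metis linorder_neqE_nat not_less_iff_gr_or_eq order.asym)

lemma gmono_le_iff: "i \<le> K \<Longrightarrow> j \<le> K \<Longrightarrow> g i \<le> g j \<longleftrightarrow> i \<le> j"
  using gmono_iff by (meson not_le)

lemma call_tail:
  assumes "1 \<le> l" "l \<le> K"
  shows "callf g K w (g (l-1)) - callf g K w (g l) = (g l - g (l-1)) * (\<Sum>i\<in>{l..K}. w i)"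
proof -
  have "callf g K w (g (l-1)) - callf g K w (g l) =
      (\<Sum>i\<le>K. w i * (max 0 (g i - g (l-1)) - max 0 (g i - g l)))"
    unfolding callf_def by (simp add: sum_subtractf[symmetric] algebra_simps)
  also have "\<dots> = (\<Sum>i\<le>K. (if l \<le> i then w i * (g l - g (l-1)) else 0))"
  proof (rule sum.cong[OF refl])
    fix i assume i: "i \<in> {..K}"
    show "w i * (max 0 (g i - g (l-1)) - max 0 (g i - g l)) = (if l \<le> i then w i * (g l - g (l-1)) else 0)"
    proof (cases "l \<le> i")
      case True
      have "g (l-1) < g l" using gmono[of "l-1" l] assms by simp
      moreover have "g l \<le> g i" using gmono_le[of l i] True i by simp
      ultimately show ?thesis using True by simp
    next
      case False
      have "g i \<le> g (l-1)" using gmono_le[of i "l-1"] False assms by simp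
      moreover have "g (l-1) < g l" using gmono[of "l-1" l] assms by simp
      ultimately show ?thesis using False by simp
    qed
  qed
  also have "\<dots> = (\<Sum>i\<in>{l..K}. w i * (g l - g (l-1)))"
    by (rule sum.mono_neutral_cong_right) auto
  also have "\<dots> = (g l - g (l-1)) * (\<Sum>i\<in>{l..K}. w i)"
    by (simp add: sum_distrib_right mult.commute)
  finally show ?thesis .
qed

lemma call_K: "callf g K w (g K) = 0"
  unfolding callf_def
proof (rule sum.neutral, intro ballI)
  fix i assume "i \<in> {..K}"
  then have "g i \<le> g K" using gmono_le by auto
  then show "w i * max 0 (g i - g K) = 0" by simp
qed

lemma call_0: "callf g K w (g 0) = (\<Sum>i\<le>K. w i * g i) - g 0 * (\<Sum>i\<le>K. w i)"
  unfolding callf_def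
  apply (simp add: sum_distrib_left sum_subtractf[symmetric])
  apply (rule sum.cong[OF refl])
  using gmono_le[of 0] by (auto simp: max_def algebra_simps)

lemma tails_eq:
  assumes "\<forall>l\<le>K. callf g K w (g l) = callf g K v (g l)"
  shows "\<forall>l\<in>{1..K}. (\<Sum>i\<in>{l..K}. w i) = (\<Sum>i\<in>{l..K}. v i)"
proof
  fix l assume l: "l \<in> {1..K}"
  have "g (l-1) < g l" using gmono[of "l-1" l] l by simp
  then show "(\<Sum>i\<in>{l..K}. w i) = (\<Sum>i\<in>{l..K}. v i)"
    using call_tail[of l w] call_tail[of l v] l assms by auto
qed

lemma eq_from_calls:
  assumes "\<forall>l\<le>K. callf g K w (g l) = callf g K v (g l)"
    and "(\<Sum>i\<le>K. w i) = (\<Sum>i\<le>K. v i)"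
  shows "\<forall>i\<le>K. w i = v i"
proof -
  have T: "\<forall>l\<in>{1..K}. (\<Sum>i\<in>{l..K}. w i) = (\<Sum>i\<in>{l..K}. v i)" using tails_eq assms by blast
  have T0: "\<forall>l\<le>K. (\<Sum>i\<in>{l..K}. w i) = (\<Sum>i\<in>{l..K}. v i)"
  proof (intro allI impI)
    fix l assume "l \<le> K"
    show "(\<Sum>i\<in>{l..K}. w i) = (\<Sum>i\<in>{l..K}. v i)"
    proof (cases "l = 0")
      case True then show ?thesis using assms(2) by (simp add: atLeast0AtMost)
    next
      case False then show ?thesis using T \<open>l \<le> K\<close> by auto
    qed
  qed
  show ?thesis
  proof (intro allI impI)
    fix i assume i: "i \<le> K"
    show "w i = v i"
    proof (cases "i = K")
      case True then show ?thesis using T0[rule_format, of K] by simp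
    next
      case False
      then have "i < K" using i by simp
      have "{i..K} = insert i {Suc i..K}" using i by auto
      then have a: "(\<Sum>j\<in>{i..K}. w j) = w i + (\<Sum>j\<in>{Suc i..K}. w j)"
        and b: "(\<Sum>j\<in>{i..K}. v j) = v i + (\<Sum>j\<in>{Suc i..K}. v j)" by auto
      then show ?thesis using T0 i \<open>i < K\<close> by (metis Suc_leI add_right_cancel)
    qed
  qed
qed

end


lemma pos_conv:
  fixes lam a b c :: real
  assumes "0 \<le> lam" "lam \<le> 1"
  shows "max 0 (c - (lam*a + (1-lam)*b)) \<le> lam * max 0 (c - a) + (1-lam) * max 0 (c-b)"
proof -
  have "c - (lam*a + (1-lam)*b) = lam*(c-a) + (1-lam)*(c-b)" by (simp add: algebra_simps)
  moreover have "lam*(c-a) \<le> lam * max 0 (c-a)" using assms by (simp add: mult_left_mono)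
  moreover have "(1-lam)*(c-b) \<le> (1-lam) * max 0 (c-b)" using assms by (simp add: mult_left_mono)
  moreover have "0 \<le> lam * max 0 (c - a) + (1-lam) * max 0 (c-b)" using assms by simp
  ultimately show ?thesis by linarith
qed

context grid begin

lemma call_conv:
  assumes "\<forall>i\<le>K. 0 \<le> w i" "0 \<le> lam" "lam \<le> 1"
  shows "callf g K w (lam*a + (1-lam)*b) \<le> lam * callf g K w a + (1-lam) * callf g K w b"
proof -
  have "callf g K w (lam*a + (1-lam)*b) \<le> (\<Sum>i\<le>K. w i * (lam * max 0 (g i - a) + (1-lam) * max 0 (g i-b)))"
    unfolding callf_def
    by (rule sum_mono) (use assms pos_conv in \<open>auto intro!: mult_left_mono\<close>)
  also have "\<dots> = (\<Sum>i\<le>K. lam * (w i * max 0 (g i - a)) + (1-lam) * (w i * max 0 (g i-b)))"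
    by (rule sum.cong) (simp_all add: algebra_simps)
  also have "\<dots> = lam * callf g K w a + (1-lam) * callf g K w b"
    unfolding callf_def by (simp add: sum_distrib_left sum.distrib)
  finally show ?thesis .
qed

lemma call_aff:
  assumes "p < q" "q \<le> K" "0 \<le> lam" "lam \<le> 1"
    and "\<forall>i. p < i \<and> i < q \<longrightarrow> w i = 0"
  shows "callf g K w (lam * g p + (1-lam) * g q) = lam * callf g K w (g p) + (1-lam) * callf g K w (g q)"
proof -
  have gpq: "g p < g q" using gmono assms by simp
  have "callf g K w (lam * g p + (1-lam) * g q) = (\<Sum>i\<le>K. w i * (lam * max 0 (g i - g p) + (1-lam) * max 0 (g i-g q)))"
    unfolding callf_def
  proof (rule sum.cong[OF refl])
    fix i assume i: "i \<in> {..K}"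
    consider "i \<le> p" | "p < i \<and> i < q" | "q \<le> i" by linarith
    then show "w i * max 0 (g i - (lam * g p + (1 - lam) * g q)) =
         w i * (lam * max 0 (g i - g p) + (1 - lam) * max 0 (g i - g q))"
    proof cases
      case 1
      then have "g i \<le> g p" using gmono_le assms i by simp
      moreover have "g p \<le> lam * g p + (1 - lam) * g q"
      proof -
        have "0 \<le> (1-lam)*(g q - g p)" using gpq assms by simp
        then show ?thesis by (simp add: algebra_simps)
      qed
      ultimately show ?thesis using gpq by simp
    next
      case 2 then show ?thesis using assms by simp
    next
      case 3
      then have "g q \<le> g i" using gmono_le assms i by simp
      moreover have "lam * g p + (1 - lam) * g q \<le> g q"
      proof -
        have "0 \<le> lam*(g q - g p)" using gpq assms by simp
        then show ?thesis by (simp add: algebra_simps)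
      qed
      ultimately show ?thesis using gpq by (simp add: algebra_simps)
    qed
  qed
  also have "\<dots> = (\<Sum>i\<le>K. lam * (w i * max 0 (g i - g p)) + (1-lam) * (w i * max 0 (g i-g q)))"
    by (rule sum.cong) (simp_all add: algebra_simps)
  also have "\<dots> = lam * callf g K w (g p) + (1-lam) * callf g K w (g q)"
    unfolding callf_def by (simp add: sum_distrib_left sum.distrib)
  finally show ?thesis .
qed

lemma exists_run:
  fixes d :: "nat \<Rightarrow> real"
  assumes d0: "d 0 = 0" and dK: "d K = 0" and dnn: "\<forall>l\<le>K. 0 \<le> d l"
    and l0: "l0 \<le> K" "d l0 > 0"
  shows "\<exists>p q. p < l0 \<and> l0 < q \<and> q \<le> K \<and> d p = 0 \<and> d q = 0 \<and> (\<forall>i. p < i \<and> i < q \<longrightarrow> d i > 0)"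
proof -
  define A where "A = {i. i < l0 \<and> d i = 0}"
  define B where "B = {i. l0 < i \<and> i \<le> K \<and> d i = 0}"
  have l00: "0 < l0" using l0 d0 by (metis gr0I less_irrefl)
  have l0K: "l0 < K" using l0 dK by (metis le_neq_implies_less less_irrefl)
  have A: "finite A" "A \<noteq> {}" unfolding A_def using l00 d0 by auto
  have B: "finite B" "B \<noteq> {}" unfolding B_def using l0K dK by auto
  define p where "p = Max A"
  define q where "q = Min B"
  have pA: "p \<in> A" using A Max_in p_def by blast
  have qB: "q \<in> B" using B Min_in q_def by blast
  have "\<forall>i. p < i \<and> i < q \<longrightarrow> d i > 0"
  proof (intro allI impI)
    fix i assume i: "p < i \<and> i < q"
    have "d i \<noteq> 0"
    proof
      assume di: "d i = 0"
      consider "i < l0" | "i = l0" | "l0 < i" by linarith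
      then show False
      proof cases
        case 1 then have "i \<in> A" using di A_def by simp
        then have "i \<le> p" using A p_def by simp
        then show False using i by simp
      next
        case 2 then show False using di l0 by simp
      next
        case 3 then have "i \<in> B" using di B_def i qB by auto
        then have "q \<le> i" using B q_def by simp
        then show False using i by simp
      qed
    qed
    moreover have "i \<le> K" using i qB B_def by auto
    ultimately show "d i > 0" using dnn by force
  qed
  then show ?thesis using pA qB unfolding A_def B_def by blast
qed

end


definition Tf :: "real \<Rightarrow> real \<Rightarrow> real \<Rightarrow> real \<Rightarrow> real" where
  "Tf a c b x = ((b-c)/(b-a)) * max 0 (a - x) + (1 - (b-c)/(b-a)) * max 0 (b - x) - max 0 (c - x)"

lemma Tf_left: assumes "a < c" "c < b" "x \<le> a" shows "Tf a c b x = 0"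
proof -
  have e: "(b-c)/(b-a) * (a - x) + (1 - (b-c)/(b-a)) * (b - x) - (c - x) = 0"
  proof -
    define L where "L = (b-c)/(b-a)"
    have h: "L*(b-a) = b-c" unfolding L_def using assms by simp
    show ?thesis unfolding L_def[symmetric] using h by algebra
  qed
  show ?thesis unfolding Tf_def using assms e by simp
qed

lemma Tf_right: assumes "a < c" "c < b" "b \<le> x" shows "Tf a c b x = 0"
  unfolding Tf_def using assms by simp

lemma Tf_mid: assumes "a < c" "c < b" "a < x" "x < b" shows "Tf a c b x > 0"
proof -
  have ba: "b - a > 0" using assms by simp
  show ?thesis
  proof (cases "x \<le> c")
    case True
    have "(1 - (b-c)/(b-a)) * (b - x) - (c - x) = (b-c)/(b-a) * (x - a)"
      using ba by (simp add: field_simps)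
    moreover have "(b-c)/(b-a) * (x - a) > 0" using assms ba by simp
    ultimately show ?thesis unfolding Tf_def using assms True by simp
  next
    case False
    have "(1 - (b-c)/(b-a)) = (c - a)/(b-a)" using ba by (simp add: field_simps)
    then have "(1 - (b-c)/(b-a)) * (b - x) > 0" using assms ba by simp
    then show ?thesis unfolding Tf_def using assms False by simp
  qed
qed

lemma Tf_nn: assumes "a < c" "c < b" shows "Tf a c b x \<ge> 0"
  using Tf_left Tf_right Tf_mid assms by (metis linorder_not_le order.strict_implies_order order_refl)

context grid begin

lemma exists_wpos:
  assumes wnn: "\<forall>i\<le>K. 0 \<le> w i" and vnn: "\<forall>i\<le>K. 0 \<le> v i"
    and pq: "p < l0" "l0 < q" "q \<le> K"
    and dp: "callf g K w (g p) = callf g K v (g p)" and dq: "callf g K w (g q) = callf g K v (g q)"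
    and dl: "callf g K w (g l0) < callf g K v (g l0)"
  shows "\<exists>l. p < l \<and> l < q \<and> w l > 0"
proof (rule ccontr)
  assume "\<not> ?thesis"
  then have w0: "\<forall>i. p < i \<and> i < q \<longrightarrow> w i = 0" using wnn pq by (meson less_imp_le_nat not_less order.trans order_antisym)
  define lam where "lam = (g q - g l0) / (g q - g p)"
  have gp: "g p < g l0" "g l0 < g q" using gmono pq by auto
  have lam01: "0 \<le> lam" "lam \<le> 1" unfolding lam_def using gp by (auto simp: field_simps)
  have gl: "g l0 = lam * g p + (1-lam) * g q"
  proof -
    have h: "lam * (g q - g p) = g q - g l0" unfolding lam_def using gp by simp
    show ?thesis using h by algebra
  qed
  have "callf g K w (g l0) = lam * callf g K w (g p) + (1-lam) * callf g K w (g q)"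
    unfolding gl by (rule call_aff) (use pq lam01 w0 in auto)
  moreover have "callf g K v (g l0) \<le> lam * callf g K v (g p) + (1-lam) * callf g K v (g q)"
    unfolding gl by (rule call_conv) (use vnn lam01 in auto)
  ultimately show False using dl dp dq by simp
qed

definition NN :: "(nat \<Rightarrow> real) \<Rightarrow> (nat \<Rightarrow> real) \<Rightarrow> nat" where
  "NN v w = card {l\<in>{..K}. callf g K w (g l) < callf g K v (g l)}
          + card {l\<in>{..K}. callf g K w (g l) < callf g K v (g l) \<and> 0 < w l}"

definition ee :: "nat \<Rightarrow> nat \<Rightarrow> nat \<Rightarrow> real \<Rightarrow> nat \<Rightarrow> real" where
  "ee p l q lam i = (if i = p then lam else 0) + (if i = q then 1 - lam else 0) - (if i = l then 1 else 0)"

lemma call_spread: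
  assumes "p \<le> K" "l \<le> K" "q \<le> K"
  shows "callf g K (\<lambda>i. w i + s * ee p l q lam i) x =
     callf g K w x + s * (lam * max 0 (g p - x) + (1-lam) * max 0 (g q - x) - max 0 (g l - x))"
proof -
  have "callf g K (\<lambda>i. w i + s * ee p l q lam i) x = callf g K w x + s * (\<Sum>i\<le>K. ee p l q lam i * max 0 (g i - x))"
    unfolding callf_def by (simp add: algebra_simps sum.distrib sum_distrib_left)
  moreover have "(\<Sum>i\<le>K. ee p l q lam i * max 0 (g i - x)) =
     (\<Sum>i\<le>K. (if i = p then lam * max 0 (g p - x) else 0) + (if i = q then (1-lam) * max 0 (g q - x) else 0)
          - (if i = l then max 0 (g l - x) else 0))"
    by (rule sum.cong) (auto simp: ee_def algebra_simps)
  moreover have "\<dots> = lam * max 0 (g p - x) + (1-lam) * max 0 (g q - x) - max 0 (g l - x)"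
    using assms by (simp add: sum.distrib sum_subtractf)
  ultimately show ?thesis by simp
qed

lemma ee_sum: assumes "p \<le> K" "l \<le> K" "q \<le> K" shows "(\<Sum>i\<le>K. ee p l q lam i) = 0"
  using assms by (simp add: ee_def sum.distrib sum_subtractf)

lemma ee_sumg: assumes "p \<le> K" "l \<le> K" "q \<le> K" shows "(\<Sum>i\<le>K. ee p l q lam i * g i) = lam * g p + (1-lam) * g q - g l"
proof -
  have "(\<Sum>i\<le>K. ee p l q lam i * g i) = (\<Sum>i\<le>K. (if i = p then lam * g p else 0) + (if i = q then (1-lam) * g q else 0)
          - (if i = l then g l else 0))"
    by (rule sum.cong) (auto simp: ee_def algebra_simps)
  then show ?thesis using assms by (simp add: sum.distrib sum_subtractf)
qed

end


context grid begin

definition coup :: "(nat \<Rightarrow> real) \<Rightarrow> (nat \<Rightarrow> real) \<Rightarrow> (nat \<Rightarrow> nat \<Rightarrow> real) \<Rightarrow> bool" where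
  "coup w v \<gamma> \<longleftrightarrow> (\<forall>i j. 0 \<le> \<gamma> i j) \<and> (\<forall>i\<le>K. (\<Sum>j\<le>K. \<gamma> i j) = w i) \<and> (\<forall>j\<le>K. (\<Sum>i\<le>K. \<gamma> i j) = v j)
      \<and> (\<forall>i\<le>K. (\<Sum>j\<le>K. \<gamma> i j * g j) = w i * g i)"

definition hypo :: "(nat \<Rightarrow> real) \<Rightarrow> (nat \<Rightarrow> real) \<Rightarrow> bool" where
  "hypo w v \<longleftrightarrow> (\<forall>i\<le>K. 0 \<le> w i) \<and> (\<forall>i\<le>K. 0 \<le> v i) \<and> (\<Sum>i\<le>K. w i) = (\<Sum>i\<le>K. v i)
     \<and> (\<Sum>i\<le>K. w i * g i) = (\<Sum>i\<le>K. v i * g i) \<and> (\<forall>l\<le>K. callf g K w (g l) \<le> callf g K v (g l))"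

lemma strassen_step:
  assumes H: "hypo w v" and p: "p < l" "l < q" "q \<le> K"
    and dp: "callf g K w (g p) = callf g K v (g p)" and dq: "callf g K w (g q) = callf g K v (g q)"
    and drun: "\<forall>i. p < i \<and> i < q \<longrightarrow> callf g K w (g i) < callf g K v (g i)"
    and wl: "w l > 0"
  shows "\<exists>w'. hypo w' v \<and> NN v w' < NN v w \<and> (\<forall>\<gamma>'. coup w' v \<gamma>' \<longrightarrow> (\<exists>\<gamma>. coup w v \<gamma>))"
proof -
  have wnn: "\<forall>i\<le>K. 0 \<le> w i" and vnn: "\<forall>i\<le>K. 0 \<le> v i" and mass: "(\<Sum>i\<le>K. w i) = (\<Sum>i\<le>K. v i)"
    and mean: "(\<Sum>i\<le>K. w i * g i) = (\<Sum>i\<le>K. v i * g i)" and cx: "\<forall>l\<le>K. callf g K w (g l) \<le> callf g K v (g l)"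
    using H unfolding hypo_def by auto
  have gpl: "g p < g l" and glq: "g l < g q" using gmono p by auto
  have lK: "l \<le> K" "p \<le> K" using p by auto
  have dist: "p \<noteq> l" "l \<noteq> q" "p \<noteq> q" using p by auto
  define lam where "lam = (g q - g l) / (g q - g p)"
  have lam01: "0 < lam" "lam < 1" unfolding lam_def using gpl glq by (auto simp: field_simps)
  have glam: "lam * g p + (1-lam) * g q = g l"
  proof -
    have h: "lam * (g q - g p) = g q - g l" unfolding lam_def using gpl glq by simp
    show ?thesis using h by algebra
  qed
  define T where "T i = Tf (g p) (g l) (g q) (g i)" for i
  have Teq: "T i = lam * max 0 (g p - g i) + (1-lam) * max 0 (g q - g i) - max 0 (g l - g i)" for i
    unfolding T_def Tf_def lam_def by simp
  have Tnn: "T i \<ge> 0" for i unfolding T_def using Tf_nn gpl glq by simp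
  have T0: "T i = 0" if "i \<le> K" "\<not> (p < i \<and> i < q)" for i
  proof -
    have "i \<le> p \<or> q \<le> i" using that by auto
    then show ?thesis
    proof
      assume "i \<le> p" then have "g i \<le> g p" using gmono_le lK by simp
      then show ?thesis unfolding T_def using Tf_left gpl glq by simp
    next
      assume "q \<le> i" then have "g q \<le> g i" using gmono_le that by simp
      then show ?thesis unfolding T_def using Tf_right gpl glq by simp
    qed
  qed
  have Tpos: "T i > 0" if "p < i" "i < q" for i
  proof -
    have "g p < g i" "g i < g q" using gmono that p by auto
    then show ?thesis unfolding T_def using Tf_mid gpl glq by simp
  qed
  define d where "d i = callf g K v (g i) - callf g K w (g i)" for i
  define S where "S = (\<lambda>i. d i / T i) ` {p<..<q}"
  have Sfin: "finite S" "S \<noteq> {}" unfolding S_def using p by auto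
  have Spos: "\<forall>x\<in>S. x > 0" unfolding S_def d_def using drun Tpos by auto
  define s where "s = min (w l) (Min S)"
  have spos: "s > 0" unfolding s_def using wl Spos Sfin Min_in by auto
  have sle: "s \<le> w l" unfolding s_def by simp
  have sT: "s * T i \<le> d i" if "p < i" "i < q" for i
  proof -
    have "d i / T i \<in> S" unfolding S_def using that by auto
    then have "Min S \<le> d i / T i" using Sfin by (simp add: Min_le)
    then have "s \<le> d i / T i" unfolding s_def by simp
    then show ?thesis using Tpos[OF that] by (simp add: field_simps)
  qed
  define w' where "w' i = w i + s * ee p l q lam i" for i
  have w'call: "callf g K w' (g i) = callf g K w (g i) + s * T i" for i
    unfolding w'_def using call_spread[OF lK(2) lK(1) p(3), of w s lam "g i"] Teq by simp
  have w'l: "w' l = w l - s" and w'p: "w' p = w p + s * lam" and w'q: "w' q = w q + s * (1 - lam)"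
    and w'o: "\<And>i. i \<noteq> l \<Longrightarrow> i \<noteq> p \<Longrightarrow> i \<noteq> q \<Longrightarrow> w' i = w i"
    unfolding w'_def ee_def using dist by auto
  have hyp': "hypo w' v"
    unfolding hypo_def
  proof (intro conjI)
    show "\<forall>i\<le>K. 0 \<le> w' i"
    proof (intro allI impI)
      fix i assume i: "i \<le> K"
      show "0 \<le> w' i"
        using w'l w'p w'q w'o[of i] wnn i sle spos lam01 lK p
        by (cases "i = l"; cases "i = p"; cases "i = q") auto
    qed
    show "\<forall>i\<le>K. 0 \<le> v i" by (rule vnn)
    show "(\<Sum>i\<le>K. w' i) = (\<Sum>i\<le>K. v i)"
      unfolding w'_def using ee_sum[OF lK(2) lK(1) p(3)] mass by (simp add: sum.distrib sum_distrib_left[symmetric])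
    show "(\<Sum>i\<le>K. w' i * g i) = (\<Sum>i\<le>K. v i * g i)"
    proof -
      have "(\<Sum>i\<le>K. w' i * g i) = (\<Sum>i\<le>K. w i * g i) + s * (\<Sum>i\<le>K. ee p l q lam i * g i)"
        unfolding w'_def by (simp add: algebra_simps sum.distrib sum_distrib_left)
      then show ?thesis using ee_sumg[OF lK(2) lK(1) p(3), of lam] glam mean by simp
    qed
    show "\<forall>la\<le>K. callf g K w' (g la) \<le> callf g K v (g la)"
    proof (intro allI impI)
      fix i assume i: "i \<le> K"
      show "callf g K w' (g i) \<le> callf g K v (g i)"
      proof (cases "p < i \<and> i < q")
        case True then show ?thesis using w'call sT[of i] d_def by simp
      next
        case False then show ?thesis using w'call T0[OF i] cx i by simp
      qed
    qed
  qed
  define D where "D w = {la\<in>{..K}. callf g K w (g la) < callf g K v (g la)}" for w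
  define E where "E w = {la\<in>{..K}. callf g K w (g la) < callf g K v (g la) \<and> 0 < w la}" for w
  have NNDE: "NN v x = card (D x) + card (E x)" for x unfolding NN_def D_def E_def by simp
  have fin: "finite (D x)" "finite (E x)" for x unfolding D_def E_def by auto
  have DD: "D w' \<subseteq> D w" unfolding D_def using w'call Tnn spos
    by auto (smt (verit) mult_nonneg_nonneg)
  have pnot: "p \<notin> D w'" "q \<notin> D w'" unfolding D_def using w'call T0 dp dq p by auto
  have EE: "E w' \<subseteq> E w"
  proof
    fix i assume i: "i \<in> E w'"
    then have iD: "i \<in> D w'" unfolding E_def D_def by auto
    then have "i \<noteq> p" "i \<noteq> q" using pnot by auto
    moreover have "0 < w' i" using i unfolding E_def by auto
    ultimately have "0 < w i" using w'l w'o[of i] sle spos by (cases "i = l") auto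
    then show "i \<in> E w" using iD DD unfolding E_def D_def by auto
  qed
  have strict: "D w' \<subset> D w \<or> E w' \<subset> E w"
  proof (cases "s = w l")
    case True
    then have "w' l = 0" using w'l by simp
    then have "l \<notin> E w'" unfolding E_def by auto
    moreover have "l \<in> E w" unfolding E_def using drun p wl lK by auto
    ultimately show ?thesis using EE by auto
  next
    case False
    then have "s = Min S" unfolding s_def by (simp add: min_def split: if_splits)
    then have "s \<in> S" using Sfin Min_in by simp
    then obtain i0 where i0: "p < i0" "i0 < q" "s = d i0 / T i0" unfolding S_def by auto
    then have "s * T i0 = d i0" using Tpos[OF i0(1,2)] by simp
    then have "i0 \<notin> D w'" unfolding D_def using w'call d_def by auto
    moreover have "i0 \<in> D w" unfolding D_def using drun i0 p by auto
    ultimately show ?thesis using DD by auto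
  qed
  have dec: "NN v w' < NN v w"
  proof -
    have "card (D w') \<le> card (D w)" "card (E w') \<le> card (E w)"
      using DD EE fin by (auto intro: card_mono)
    moreover have "card (D w') < card (D w) \<or> card (E w') < card (E w)"
      using strict fin psubset_card_mono by blast
    ultimately show ?thesis unfolding NNDE by linarith
  qed
  have lift: "\<exists>\<gamma>. coup w v \<gamma>" if c': "coup w' v \<gamma>'" for \<gamma>'
  proof -
    have g'nn: "\<forall>i j. 0 \<le> \<gamma>' i j" and g'row: "\<forall>i\<le>K. (\<Sum>j\<le>K. \<gamma>' i j) = w' i"
      and g'col: "\<forall>j\<le>K. (\<Sum>i\<le>K. \<gamma>' i j) = v j" and g'bar: "\<forall>i\<le>K. (\<Sum>j\<le>K. \<gamma>' i j * g j) = w' i * g i"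
      using c' unfolding coup_def by auto
    have w'ppos: "w' p > 0" using w'p wnn lK spos lam01 by (simp add: add_nonneg_pos)
    have w'qpos: "w' q > 0" using w'q wnn lK spos lam01 p by (simp add: add_nonneg_pos)
    define a where "a = s * lam / w' p"
    define b where "b = s * (1-lam) / w' q"
    have a01: "0 \<le> a" "a \<le> 1" unfolding a_def using w'ppos w'p spos lam01 wnn lK by (auto simp: field_simps)
    have b01: "0 \<le> b" "b \<le> 1" unfolding b_def using w'qpos w'q spos lam01 wnn lK p by (auto simp: field_simps)
    have aw: "a * w' p = s * lam" unfolding a_def using w'ppos by simp
    have bw: "b * w' q = s * (1-lam)" unfolding b_def using w'qpos by simp
    define \<gamma> where "\<gamma> i j = \<gamma>' i j + (if i = l then a * \<gamma>' p j + b * \<gamma>' q j else 0)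
         - (if i = p then a * \<gamma>' p j else 0) - (if i = q then b * \<gamma>' q j else 0)" for i j
    have "coup w v \<gamma>"
      unfolding coup_def
    proof (intro conjI allI impI)
      fix i j
      show "0 \<le> \<gamma> i j"
      proof -
        consider "i = l" | "i = p" | "i = q" | "i \<noteq> l \<and> i \<noteq> p \<and> i \<noteq> q" by blast
        then show ?thesis
        proof cases
          case 1 then show ?thesis unfolding \<gamma>_def using dist g'nn a01 b01 by simp
        next
          case 2
          then have "\<gamma> i j = (1 - a) * \<gamma>' p j" unfolding \<gamma>_def using dist by (simp add: algebra_simps)
          then show ?thesis using g'nn a01 by simp
        next
          case 3
          then have "\<gamma> i j = (1 - b) * \<gamma>' q j" unfolding \<gamma>_def using dist by (simp add: algebra_simps)
          then show ?thesis using g'nn b01 by simp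
        next
          case 4 then show ?thesis unfolding \<gamma>_def using g'nn by simp
        qed
      qed
    next
      fix i assume i: "i \<le> K"
      consider "i = l" | "i = p" | "i = q" | "i \<noteq> l \<and> i \<noteq> p \<and> i \<noteq> q" by blast
      then show "(\<Sum>j\<le>K. \<gamma> i j) = w i"
      proof cases
        case 1
        then have "(\<Sum>j\<le>K. \<gamma> i j) = (\<Sum>j\<le>K. \<gamma>' l j) + a * (\<Sum>j\<le>K. \<gamma>' p j) + b * (\<Sum>j\<le>K. \<gamma>' q j)"
          unfolding \<gamma>_def using dist by (simp add: sum.distrib sum_distrib_left)
        then show ?thesis using g'row lK p 1 aw bw w'l by (simp add: algebra_simps)
      next
        case 2
        then have "(\<Sum>j\<le>K. \<gamma> i j) = (\<Sum>j\<le>K. \<gamma>' p j) - a * (\<Sum>j\<le>K. \<gamma>' p j)"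
          unfolding \<gamma>_def using dist by (simp add: sum_subtractf sum_distrib_left)
        then show ?thesis using g'row lK p 2 aw w'p by (simp add: algebra_simps)
      next
        case 3
        then have "(\<Sum>j\<le>K. \<gamma> i j) = (\<Sum>j\<le>K. \<gamma>' q j) - b * (\<Sum>j\<le>K. \<gamma>' q j)"
          unfolding \<gamma>_def using dist by (simp add: sum_subtractf sum_distrib_left)
        then show ?thesis using g'row lK p 3 bw w'q by (simp add: algebra_simps)
      next
        case 4 then show ?thesis unfolding \<gamma>_def using g'row i w'o by simp
      qed
    next
      fix j assume j: "j \<le> K"
      have "(\<Sum>i\<le>K. \<gamma> i j) = (\<Sum>i\<le>K. \<gamma>' i j) + (a * \<gamma>' p j + b * \<gamma>' q j) - a * \<gamma>' p j - b * \<gamma>' q j"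
        unfolding \<gamma>_def using lK p by (simp add: sum.distrib sum_subtractf)
      then show "(\<Sum>i\<le>K. \<gamma> i j) = v j" using g'col j by simp
    next
      fix i assume i: "i \<le> K"
      consider "i = l" | "i = p" | "i = q" | "i \<noteq> l \<and> i \<noteq> p \<and> i \<noteq> q" by blast
      then show "(\<Sum>j\<le>K. \<gamma> i j * g j) = w i * g i"
      proof cases
        case 1
        then have "(\<Sum>j\<le>K. \<gamma> i j * g j) = (\<Sum>j\<le>K. \<gamma>' l j * g j) + a * (\<Sum>j\<le>K. \<gamma>' p j * g j) + b * (\<Sum>j\<le>K. \<gamma>' q j * g j)"
          unfolding \<gamma>_def using dist by (simp add: sum.distrib sum_distrib_left algebra_simps)
        also have "\<dots> = w' l * g l + (a * w' p) * g p + (b * w' q) * g q" using g'bar lK p by simp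
        also have "\<dots> = w l * g l"
        proof -
          have e: "s * (lam * g p + (1 - lam) * g q) = s * g l" using glam by simp
          show ?thesis unfolding aw bw w'l using e by (simp add: algebra_simps)
        qed
        finally show ?thesis using 1 by simp
      next
        case 2
        then have "(\<Sum>j\<le>K. \<gamma> i j * g j) = (\<Sum>j\<le>K. \<gamma>' p j * g j) - a * (\<Sum>j\<le>K. \<gamma>' p j * g j)"
          unfolding \<gamma>_def using dist by (simp add: sum_subtractf sum_distrib_left algebra_simps)
        also have "\<dots> = w' p * g p - (a * w' p) * g p" using g'bar lK by simp
        also have "\<dots> = w p * g p" unfolding aw unfolding w'p by (simp add: algebra_simps)
        finally show ?thesis using 2 by simp
      next
        case 3
        then have "(\<Sum>j\<le>K. \<gamma> i j * g j) = (\<Sum>j\<le>K. \<gamma>' q j * g j) - b * (\<Sum>j\<le>K. \<gamma>' q j * g j)"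
          unfolding \<gamma>_def using dist by (simp add: sum_subtractf sum_distrib_left algebra_simps)
        also have "\<dots> = w' q * g q - (b * w' q) * g q" using g'bar p by simp
        also have "\<dots> = w q * g q" unfolding bw unfolding w'q by (simp add: algebra_simps)
        finally show ?thesis using 3 by simp
      next
        case 4 then show ?thesis unfolding \<gamma>_def using g'bar i w'o by simp
      qed
    qed
    then show ?thesis by blast
  qed
  show ?thesis using hyp' dec lift by blast
qed

end


context grid begin

lemma strassen:
  assumes "hypo w v" shows "\<exists>\<gamma>. coup w v \<gamma>"
proof -
  have "\<forall>w. NN v w = n \<longrightarrow> hypo w v \<longrightarrow> (\<exists>\<gamma>. coup w v \<gamma>)" for n
  proof (induction n rule: less_induct)
    case (less n)
    show ?case
    proof (intro allI impI)
      fix w assume N: "NN v w = n" and H: "hypo w v"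
      have wnn: "\<forall>i\<le>K. 0 \<le> w i" and vnn: "\<forall>i\<le>K. 0 \<le> v i" and mass: "(\<Sum>i\<le>K. w i) = (\<Sum>i\<le>K. v i)"
        and mean: "(\<Sum>i\<le>K. w i * g i) = (\<Sum>i\<le>K. v i * g i)" and cx: "\<forall>l\<le>K. callf g K w (g l) \<le> callf g K v (g l)"
        using H unfolding hypo_def by auto
      show "\<exists>\<gamma>. coup w v \<gamma>"
      proof (cases "\<forall>l\<le>K. callf g K w (g l) = callf g K v (g l)")
        case True
        then have wv: "\<forall>i\<le>K. w i = v i" using eq_from_calls mass by blast
        define \<gamma> where "\<gamma> i j = (if i = j \<and> i \<le> K then v i else 0)" for i j
        have mi: "\<And>P (x::real) y. (if P then x else 0) * y = (if P then x * y else 0)" by simp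
        have "coup w v \<gamma>" unfolding coup_def \<gamma>_def using vnn wv by (auto simp: mi)
        then show ?thesis by blast
      next
        case False
        then obtain l0 where l0: "l0 \<le> K" "callf g K w (g l0) < callf g K v (g l0)"
          using cx by (meson order.not_eq_order_implies_strict)
        define d where "d l = callf g K v (g l) - callf g K w (g l)" for l
        have d0: "d 0 = 0" unfolding d_def using call_0[of w] call_0[of v] mass mean by simp
        have dK: "d K = 0" unfolding d_def using call_K by simp
        have dnn: "\<forall>l\<le>K. 0 \<le> d l" unfolding d_def using cx by simp
        obtain p q where pq: "p < l0" "l0 < q" "q \<le> K" "d p = 0" "d q = 0" "\<forall>i. p < i \<and> i < q \<longrightarrow> d i > 0"
          using exists_run[of d l0, OF d0 dK dnn l0(1)] l0 d_def by auto
        obtain l where l: "p < l" "l < q" "w l > 0"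
          using exists_wpos[OF wnn vnn pq(1,2,3)] pq(4,5) l0(2) unfolding d_def by auto
        obtain w' where w': "hypo w' v" "NN v w' < NN v w" "\<forall>\<gamma>'. coup w' v \<gamma>' \<longrightarrow> (\<exists>\<gamma>. coup w v \<gamma>)"
          using strassen_step[OF H l(1,2) pq(3), of ] pq(4,5,6) l(3) unfolding d_def by auto
        have "\<exists>\<gamma>'. coup w' v \<gamma>'" using less.IH[of "NN v w'"] w'(1,2) N by blast
        then show ?thesis using w'(3) by blast
      qed
    qed
  qed
  then show ?thesis using assms by blast
qed

end


lemma conv_cross:
  fixes a b x fa fb fx :: real
  assumes "a < x" "x < b"
    and "\<And>lam. 0 \<le> lam \<Longrightarrow> lam \<le> 1 \<Longrightarrow> x = lam * a + (1-lam) * b \<Longrightarrow> fx \<le> lam * fa + (1-lam) * fb"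
  shows "fx * (b - a) \<le> fa * (b - x) + fb * (x - a)"
proof -
  define lam where "lam = (b - x) / (b - a)"
  have l01: "0 \<le> lam" "lam \<le> 1" unfolding lam_def using assms by (auto simp: field_simps)
  have hx: "lam * (b - a) = b - x" unfolding lam_def using assms by simp
  have "x = lam * a + (1-lam) * b" using hx by algebra
  then have "fx \<le> lam * fa + (1-lam) * fb" using assms(3) l01 by blast
  then have "fx * (b - a) \<le> (lam * fa + (1-lam) * fb) * (b - a)" using assms by (simp add: mult_right_mono)
  also have "\<dots> = fa * (lam * (b-a)) + fb * ((b - a) - lam * (b - a))" by (simp add: algebra_simps)
  also have "\<dots> = fa * (b - x) + fb * (x - a)" unfolding hx by simp
  finally show ?thesis .
qed

context grid begin

lemma call_grid_conv:
  assumes "\<forall>i\<le>K. 0 \<le> w i" "0 < l" "l < K"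
  shows "callf g K w (g l) * (g (l+1) - g (l-1)) \<le> callf g K w (g (l-1)) * (g (l+1) - g l) + callf g K w (g (l+1)) * (g l - g (l-1))"
proof (rule conv_cross)
  show "g (l-1) < g l" "g l < g (l+1)" using gmono assms by auto
  fix lam :: real assume "0 \<le> lam" "lam \<le> 1" "g l = lam * g (l - 1) + (1 - lam) * g (l + 1)"
  then show "callf g K w (g l) \<le> lam * callf g K w (g (l - 1)) + (1 - lam) * callf g K w (g (l + 1))"
    using call_conv[OF assms(1)] by metis
qed

lemma join_exists:
  fixes c :: "nat \<Rightarrow> real" and M :: real
  assumes K1: "1 \<le> K" and cK: "c K = 0" and cK1: "0 \<le> c (K-1)"
    and cconv: "\<forall>l. 0 < l \<and> l < K \<longrightarrow> c l * (g (l+1) - g (l-1)) \<le> c (l-1) * (g (l+1) - g l) + c (l+1) * (g l - g (l-1))"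
    and cstart: "c 0 - c 1 \<le> (g 1 - g 0) * M"
  shows "\<exists>v. (\<forall>i\<le>K. 0 \<le> v i) \<and> (\<Sum>i\<le>K. v i) = M \<and> (\<forall>l\<le>K. callf g K v (g l) = c l)"
proof -
  define S where "S l = (if l = 0 then M else if l \<le> K then (c (l-1) - c l) / (g l - g (l-1)) else 0)" for l
  define v where "v l = S l - S (Suc l)" for l
  have gd: "g (l-1) < g l" if "1 \<le> l" "l \<le> K" for l using gmono that by simp
  have tail: "(\<Sum>i\<in>{l..K}. v i) = S l" if "l \<le> K" for l
  proof -
    have "(\<Sum>i\<in>{l..K}. v i) = - (\<Sum>i\<in>{l..K}. S (Suc i) - S i)" unfolding v_def by (simp add: sum_negf[symmetric])
    also have "\<dots> = S l - S (Suc K)" using sum_Suc_diff[of l K S] that by simp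
    finally show ?thesis unfolding S_def by simp
  qed
  have vnn: "\<forall>i\<le>K. 0 \<le> v i"
  proof (intro allI impI)
    fix i assume i: "i \<le> K"
    consider "i = 0" | "0 < i \<and> i < K" | "i = K" using i by linarith
    then show "0 \<le> v i"
    proof cases
      case 1
      have S1: "S 1 = (c 0 - c 1) / (g 1 - g 0)" unfolding S_def using K1 by simp
      have "(c 0 - c 1) / (g 1 - g 0) \<le> M" using cstart gd[of 1] K1 by (simp add: divide_le_eq mult.commute)
      then have "S 1 \<le> M" using S1 by simp
      moreover have "S 0 = M" unfolding S_def by simp
      ultimately show ?thesis using 1 unfolding v_def by simp
    next
      case 2
      have g1: "g (i-1) < g i" "g i < g (i+1)" using gmono 2 by auto
      have "(c i - c (i+1)) / (g (i+1) - g i) \<le> (c (i-1) - c i) / (g i - g (i-1))"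
        using cconv 2 g1 by (simp add: divide_simps) (simp add: algebra_simps)
      then show ?thesis using 2 unfolding v_def S_def by simp
    next
      case 3
      have "0 \<le> (c (K-1) - c K) / (g K - g (K-1))" using cK cK1 gd[of K] K1 by simp
      then show ?thesis using 3 K1 unfolding v_def S_def by simp
    qed
  qed
  have mass: "(\<Sum>i\<le>K. v i) = M" using tail[of 0] unfolding S_def by (simp add: atLeast0AtMost)
  have calls: "callf g K v (g (K - k)) = c (K - k)" if "k \<le> K" for k
    using that
  proof (induction k)
    case 0 then show ?case using call_K cK by simp
  next
    case (Suc k)
    define l where "l = K - k"
    have l: "1 \<le> l" "l \<le> K" using Suc l_def by auto
    have e: "K - Suc k = l - 1" unfolding l_def by simp
    have "callf g K v (g (l-1)) = callf g K v (g l) + (g l - g (l-1)) * S l"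
      using call_tail[OF l, of v] tail[OF l(2)] by simp
    also have "\<dots> = c l + (c (l-1) - c l)" using Suc l l_def gd[OF l] unfolding S_def by simp
    finally show ?case unfolding e by simp
  qed
  have "\<forall>l\<le>K. callf g K v (g l) = c l"
  proof (intro allI impI)
    fix l assume "l \<le> K"
    then show "callf g K v (g l) = c l" using calls[of "K - l"] by simp
  qed
  then show ?thesis using vnn mass by blast
qed

end


context grid begin

lemma split_exists:
  assumes K1: "1 \<le> K" and x: "g 0 \<le> x" "x \<le> g K"
  shows "\<exists>lam. (\<forall>i. 0 \<le> lam i) \<and> (\<Sum>i\<le>K. lam i) = 1 \<and> (\<Sum>i\<le>K. lam i * g i) = x
             \<and> (\<forall>l\<le>K. (\<Sum>i\<le>K. lam i * max 0 (g i - g l)) = max 0 (x - g l))"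
proof -
  define Z where "Z = {s. s < K \<and> g s \<le> x}"
  have "0 \<in> Z" unfolding Z_def using K1 x by auto
  then have Z: "finite Z" "Z \<noteq> {}" unfolding Z_def by auto
  define s where "s = Max Z"
  have sZ: "s \<in> Z" unfolding s_def using Z Max_in by blast
  then have sK: "s < K" and gs: "g s \<le> x" unfolding Z_def by auto
  have gs1: "x \<le> g (Suc s)"
  proof (cases "Suc s = K")
    case True then show ?thesis using x by simp
  next
    case False
    then have "Suc s < K" using sK by simp
    moreover have "Suc s \<notin> Z" using Z s_def Max_ge by (metis Suc_n_not_le_n)
    ultimately show ?thesis unfolding Z_def by auto
  qed
  have gss: "g s < g (Suc s)" using gstep sK by simp
  define A where "A = (g (Suc s) - x) / (g (Suc s) - g s)"
  define B where "B = (x - g s) / (g (Suc s) - g s)"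
  have AB1: "0 \<le> A" "0 \<le> B" unfolding A_def B_def using gs gs1 gss by auto
  have "A + B = ((g (Suc s) - x) + (x - g s)) / (g (Suc s) - g s)" unfolding A_def B_def by (rule add_divide_distrib[symmetric])
  also have "\<dots> = 1" using gss by simp
  finally have AB: "0 \<le> A" "0 \<le> B" "A + B = 1" using AB1 by auto
  have ABx: "A * g s + B * g (Suc s) = x"
  proof -
    have h1: "A * (g (Suc s) - g s) = g (Suc s) - x" and h2: "B * (g (Suc s) - g s) = x - g s"
      unfolding A_def B_def using gss by auto
    show ?thesis using h2 AB(3) by algebra
  qed
  define lam where "lam i = (if i = s then A else 0) + (if i = Suc s then B else 0)" for i
  have mi: "\<And>P (a::real) b. (if P then a else 0) * b = (if P then a * b else 0)" by simp
  have sumf: "(\<Sum>i\<le>K. lam i * f i) = A * f s + B * f (Suc s)" for f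
    unfolding lam_def using sK by (simp add: distrib_right sum.distrib mi)
  have "(\<Sum>i\<le>K. lam i) = 1" using sumf[of "\<lambda>_. 1"] AB by simp
  moreover have "(\<Sum>i\<le>K. lam i * g i) = x" using sumf[of g] ABx by simp
  moreover have "\<forall>l\<le>K. (\<Sum>i\<le>K. lam i * max 0 (g i - g l)) = max 0 (x - g l)"
  proof (intro allI impI)
    fix l assume l: "l \<le> K"
    show "(\<Sum>i\<le>K. lam i * max 0 (g i - g l)) = max 0 (x - g l)"
    proof (cases "l \<le> s")
      case True
      then have "g l \<le> g s" using gmono_le sK by simp
      then have "(\<Sum>i\<le>K. lam i * max 0 (g i - g l)) = A * (g s - g l) + B * (g (Suc s) - g l)"
        using sumf gss by simp
      also have "\<dots> = (A * g s + B * g (Suc s)) - (A + B) * g l" by (simp add: algebra_simps)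
      also have "\<dots> = x - g l" using ABx AB(3) by simp
      finally show ?thesis using \<open>g l \<le> g s\<close> gs by simp
    next
      case False
      then have "g (Suc s) \<le> g l" using gmono_le l by simp
      then have "(\<Sum>i\<le>K. lam i * max 0 (g i - g l)) = 0" using sumf gss by simp
      then show ?thesis using gs1 \<open>g (Suc s) \<le> g l\<close> by simp
    qed
  qed
  moreover have "\<forall>i. 0 \<le> lam i" unfolding lam_def using AB by simp
  ultimately show ?thesis by blast
qed

end


locale thm2 =
  fixes u :: "nat \<Rightarrow> nat \<Rightarrow> real"
    and n m :: nat
    and Y :: "nat \<Rightarrow> 'y set"
    and P :: "nat \<Rightarrow> nat \<Rightarrow> 'y \<Rightarrow> real"
    and \<sigma>s :: "nat \<Rightarrow> (nat \<Rightarrow> 'y) \<Rightarrow> nat \<Rightarrow> real"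
  assumes n: "n \<ge> 1" and m: "m \<ge> 1"
    and exps: "\<forall>j<m. is_experiment {1,2} (Y j) (P j)"
    and incr1: "\<forall>i\<in>{1..<n}. u 1 i < u 1 (Suc i)"
    and decr2: "\<forall>i\<in>{1..<n}. u 2 i > u 2 (Suc i)"
    and norm: "u 1 1 = 0" "u 2 1 = 0"
    and undom: "\<forall>i\<in>{1..n}. \<not> weakly_star_dominated {1,2} {1..n} u i"
    and ropt: "\<forall>l\<in>{1..<n}. robustly_optimal {1,2} {0,1} (ustar u l) m Y P (\<sigma>s l)"
begin

definition d1 where "d1 l = u 1 (Suc l) - u 1 l"
definition d2 where "d2 l = u 2 (Suc l) - u 2 l"
definition gr where "gr l = (if l = 0 then 0 else if l < n then - d2 l / (d1 l - d2 l) else 1)"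

lemma d1pos: "1 \<le> l \<Longrightarrow> l < n \<Longrightarrow> d1 l > 0" using incr1 unfolding d1_def by auto
lemma d2neg: "1 \<le> l \<Longrightarrow> l < n \<Longrightarrow> d2 l < 0" using decr2 unfolding d2_def by auto

lemma conc_real:
  fixes a b c e U :: real
  assumes "a > 0" "b > 0" "c > 0" "e > 0"
    and "U > (b/(a+b)) * (U + c) + (1 - b/(a+b)) * (U - e)"
  shows "c/(a+c) < e/(b+e)"
proof -
  define L where "L = b/(a+b)"
  have hL: "L * (a+b) = b" unfolding L_def using assms by simp
  have "L * c < (1 - L) * e" using assms(5) unfolding L_def[symmetric] by (simp add: algebra_simps)
  then have "L * c * (a+b) < (1 - L) * e * (a+b)" using assms by simp
  moreover have "L * c * (a+b) = b * c"
  proof -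
    have "L * c * (a+b) = (L * (a+b)) * c" by (simp add: algebra_simps)
    then show ?thesis using hL by simp
  qed
  moreover have "(1 - L) * e * (a+b) = a * e"
  proof -
    have "(1 - L) * e * (a+b) = ((a + b) - L * (a+b)) * e" by (simp add: algebra_simps)
    then show ?thesis using hL by simp
  qed
  ultimately have "b * c < a * e" by simp
  then show ?thesis using assms by (simp add: divide_simps) (simp add: algebra_simps)
qed

lemma gr_step: assumes "i < n" shows "gr i < gr (Suc i)"
proof -
  consider "i = 0" | "1 \<le> i \<and> Suc i < n" | "1 \<le> i \<and> Suc i = n" using assms by linarith
  then show ?thesis
  proof cases
    case 1
    show ?thesis
    proof (cases "1 < n")
      case True
      then have "d1 1 > 0" "d2 1 < 0" using d1pos d2neg by auto
      then have "- d2 1 / (d1 1 - d2 1) > 0" by (intro divide_pos_pos) auto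
      then show ?thesis unfolding gr_def using 1 True by simp
    next
      case False then show ?thesis unfolding gr_def using 1 by simp
    qed
  next
    case 2
    define a where "a = d1 i"
    define b where "b = d1 (Suc i)"
    define c where "c = - d2 i"
    define e where "e = - d2 (Suc i)"
    have pos: "a > 0" "b > 0" "c > 0" "e > 0" unfolding a_def b_def c_def e_def using d1pos d2neg 2 by auto
    define L where "L = b/(a+b)"
    have L01: "0 \<le> L" "L \<le> 1" unfolding L_def using pos by auto
    define \<alpha> where "\<alpha> x = (if x = i then L else if x = Suc (Suc i) then 1 - L else 0)" for x
    have mem: "i \<in> {1..n} - {Suc i}" "Suc (Suc i) \<in> {1..n} - {Suc i}" using 2 by auto
    have fin: "finite ({1..n} - {Suc i})" by simp
    have sumf: "(\<Sum>x\<in>{1..n} - {Suc i}. \<alpha> x * f x) = L * f i + (1 - L) * f (Suc (Suc i))" for f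
    proof -
      have "(\<Sum>x\<in>{1..n} - {Suc i}. \<alpha> x * f x) = (\<Sum>x\<in>{1..n} - {Suc i}. (if x = i then L * f i else 0) + (if x = Suc (Suc i) then (1 - L) * f (Suc (Suc i)) else 0))"
        by (rule sum.cong) (auto simp: \<alpha>_def)
      also have "\<dots> = L * f i + (1 - L) * f (Suc (Suc i))" using mem fin by (simp add: sum.distrib)
      finally show ?thesis .
    qed
    have dist: "is_dist ({1..n} - {Suc i}) \<alpha>"
      unfolding is_dist_def using sumf[of "\<lambda>_. 1"] L01 by (auto simp: \<alpha>_def)
    have eu: "eu ({1..n} - {Suc i}) u \<theta> \<alpha> = L * u \<theta> i + (1 - L) * u \<theta> (Suc (Suc i))" for \<theta>
      unfolding eu_def using sumf[of "u \<theta>"] by simp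
    have "Suc i \<in> {1..n}" using 2 by auto
    then have nd: "\<not> weakly_star_dominated {1,2} {1..n} u (Suc i)" using undom by blast
    have e1: "eu ({1..n} - {Suc i}) u 1 \<alpha> = u 1 (Suc i)"
    proof -
      have u1: "u 1 i = u 1 (Suc i) - a" "u 1 (Suc (Suc i)) = u 1 (Suc i) + b" unfolding a_def b_def d1_def by auto
      have hL: "L * (a+b) = b" unfolding L_def using pos by simp
      have "L * (u 1 (Suc i) - a) + (1 - L) * (u 1 (Suc i) + b) = u 1 (Suc i) - (L * (a+b) - b)"
        by (simp add: algebra_simps)
      then show ?thesis unfolding eu u1 using hL by simp
    qed
    then have "\<not> (u 2 (Suc i) \<le> eu ({1..n} - {Suc i}) u 2 \<alpha>)"
      using nd dist unfolding weakly_star_dominated_def by auto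
    then have "u 2 (Suc i) > L * (u 2 (Suc i) + c) + (1 - L) * (u 2 (Suc i) - e)"
      unfolding eu c_def e_def d2_def by simp
    then have "c/(a+c) < e/(b+e)" using conc_real[OF pos] unfolding L_def by blast
    moreover have "gr i = c/(a+c)" "gr (Suc i) = e/(b+e)" unfolding gr_def a_def b_def c_def e_def using 2
      by (auto simp: algebra_simps)
    ultimately show ?thesis by simp
  next
    case 3
    have "d1 i > 0" "d2 i < 0" using d1pos d2neg 3 by auto
    then have "- d2 i / (d1 i - d2 i) < 1" by (simp add: divide_simps)
    then show ?thesis unfolding gr_def using 3 by simp
  qed
qed

sublocale grid gr n by unfold_locales (rule gr_step)

lemma gr0: "gr 0 = 0" and grn: "gr n = 1" unfolding gr_def using n by auto

lemma gr_thr: assumes "1 \<le> l" "l < n" shows "gr l * (d1 l - d2 l) = - d2 l"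
  using d1pos[OF assms] d2neg[OF assms] assms unfolding gr_def by simp

end


context thm2 begin

lemma finY: "j < m \<Longrightarrow> finite (Y j)" using exps unfolding is_experiment_def by auto
lemma Pnn: "j < m \<Longrightarrow> \<theta> \<in> {1,2} \<Longrightarrow> y \<in> Y j \<Longrightarrow> 0 \<le> P j \<theta> y"
  using exps unfolding is_experiment_def is_dist_def by blast
lemma Psum: "j < m \<Longrightarrow> \<theta> \<in> {1,2} \<Longrightarrow> sum (P j \<theta>) (Y j) = 1"
  using exps unfolding is_experiment_def is_dist_def by blast

definition wj where "wj j y = P j 1 y + P j 2 y"
definition post where "post j y = P j 1 y / wj j y"

lemma wj_nn: "j < m \<Longrightarrow> y \<in> Y j \<Longrightarrow> 0 \<le> wj j y" unfolding wj_def using Pnn by (simp add: add_nonneg_nonneg)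

lemma post01: assumes "j < m" "y \<in> Y j" shows "0 \<le> post j y" "post j y \<le> 1"
  unfolding post_def wj_def using Pnn[OF assms(1) _ assms(2), of 1] Pnn[OF assms(1) _ assms(2), of 2]
  by (auto simp: divide_le_eq_1)

lemma wpost: assumes "j < m" "y \<in> Y j" shows "wj j y * post j y = P j 1 y"
proof (cases "wj j y = 0")
  case True
  then have "P j 1 y = 0" unfolding wj_def using Pnn[OF assms(1) _ assms(2), of 1] Pnn[OF assms(1) _ assms(2), of 2] by simp
  then show ?thesis using True by simp
next
  case False then show ?thesis unfolding post_def by simp
qed

definition splitp :: "real \<Rightarrow> (nat \<Rightarrow> real) \<Rightarrow> bool" where
  "splitp x lam \<longleftrightarrow> (\<forall>i. 0 \<le> lam i) \<and> (\<Sum>i\<le>n. lam i) = 1 \<and> (\<Sum>i\<le>n. lam i * gr i) = x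
             \<and> (\<forall>l\<le>n. (\<Sum>i\<le>n. lam i * max 0 (gr i - gr l)) = max 0 (x - gr l))"

definition lamj where "lamj j y = (SOME lam. splitp (post j y) lam)"

lemma lamj: assumes "j < m" "y \<in> Y j" shows "splitp (post j y) (lamj j y)"
proof -
  have "\<exists>lam. splitp (post j y) lam"
    unfolding splitp_def using split_exists[of "post j y"] n post01[OF assms] gr0 grn by simp
  then show ?thesis unfolding lamj_def by (rule someI_ex)
qed

definition W where "W j i = (\<Sum>y\<in>Y j. wj j y * lamj j y i)"

lemma W_nn: "j < m \<Longrightarrow> 0 \<le> W j i"
  unfolding W_def using wj_nn lamj unfolding splitp_def by (auto intro!: sum_nonneg)

lemma W_mass: assumes "j < m" shows "(\<Sum>i\<le>n. W j i) = 2"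
proof -
  have "(\<Sum>i\<le>n. W j i) = (\<Sum>y\<in>Y j. wj j y * (\<Sum>i\<le>n. lamj j y i))"
    unfolding W_def by (simp add: sum_distrib_left sum.swap[of _ "{..n}"])
  also have "\<dots> = (\<Sum>y\<in>Y j. wj j y)" using lamj[OF assms] unfolding splitp_def by simp
  also have "\<dots> = 2" unfolding wj_def using Psum[OF assms] by (simp add: sum.distrib)
  finally show ?thesis .
qed

lemma W_mean: assumes "j < m" shows "(\<Sum>i\<le>n. W j i * gr i) = 1"
proof -
  have "(\<Sum>i\<le>n. W j i * gr i) = (\<Sum>y\<in>Y j. wj j y * (\<Sum>i\<le>n. lamj j y i * gr i))"
    unfolding W_def by (simp add: sum_distrib_left sum_distrib_right sum.swap[of _ "{..n}"] algebra_simps)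
  also have "\<dots> = (\<Sum>y\<in>Y j. wj j y * post j y)" using lamj[OF assms] unfolding splitp_def by simp
  also have "\<dots> = (\<Sum>y\<in>Y j. P j 1 y)" using wpost[OF assms] by simp
  also have "\<dots> = 1" using Psum[OF assms] by simp
  finally show ?thesis .
qed

lemma W_call: assumes "j < m" "l \<le> n"
  shows "callf gr n (W j) (gr l) = (\<Sum>y\<in>Y j. max 0 (P j 1 y - gr l * wj j y))"
proof -
  have "callf gr n (W j) (gr l) = (\<Sum>y\<in>Y j. wj j y * (\<Sum>i\<le>n. lamj j y i * max 0 (gr i - gr l)))"
    unfolding callf_def W_def by (simp add: sum_distrib_left sum_distrib_right sum.swap[of _ "{..n}"] algebra_simps)
  also have "\<dots> = (\<Sum>y\<in>Y j. wj j y * max 0 (post j y - gr l))" using lamj[OF assms(1)] assms(2) unfolding splitp_def by simp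
  also have "\<dots> = (\<Sum>y\<in>Y j. max 0 (P j 1 y - gr l * wj j y))"
  proof (rule sum.cong[OF refl])
    fix y assume y: "y \<in> Y j"
    have "wj j y * max 0 (post j y - gr l) = max 0 (wj j y * (post j y - gr l))"
      using wj_nn[OF assms(1) y] by (simp add: max_mult_distrib_left)
    also have "\<dots> = max 0 (P j 1 y - gr l * wj j y)" using wpost[OF assms(1) y] by (simp add: algebra_simps)
    finally show "wj j y * max 0 (post j y - gr l) = max 0 (P j 1 y - gr l * wj j y)" .
  qed
  finally show ?thesis .
qed

lemma call_nn: "\<forall>i\<le>n. 0 \<le> w i \<Longrightarrow> 0 \<le> callf gr n w x"
  unfolding callf_def by (auto intro!: sum_nonneg)

definition cc where "cc l = Max ((\<lambda>j. callf gr n (W j) (gr l)) ` {..<m})"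

lemma cc_ge: "j < m \<Longrightarrow> callf gr n (W j) (gr l) \<le> cc l"
  unfolding cc_def by (rule Max_ge) auto

lemma cc_in: "\<exists>j<m. cc l = callf gr n (W j) (gr l)"
proof -
  have "cc l \<in> (\<lambda>j. callf gr n (W j) (gr l)) ` {..<m}"
    unfolding cc_def by (rule Max_in) (use m in \<open>auto simp: lessThan_empty_iff\<close>)
  then show ?thesis by auto
qed

lemma W_call0: "j < m \<Longrightarrow> callf gr n (W j) (gr 0) = 1"
  using call_0[of "W j"] W_mean gr0 by simp

lemma join: "\<exists>v. (\<forall>i\<le>n. 0 \<le> v i) \<and> (\<Sum>i\<le>n. v i) = 2 \<and> (\<forall>l\<le>n. callf gr n v (gr l) = cc l)"
proof (rule join_exists[OF n])
  show "cc n = 0" using cc_in[of n] call_K by auto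
  show "0 \<le> cc (n-1)" using cc_in[of "n-1"] call_nn W_nn by metis
  show "\<forall>l. 0 < l \<and> l < n \<longrightarrow> cc l * (gr (l + 1) - gr (l - 1)) \<le> cc (l - 1) * (gr (l + 1) - gr l) + cc (l + 1) * (gr l - gr (l - 1))"
  proof (intro allI impI)
    fix l assume l: "0 < l \<and> l < n"
    obtain j where j: "j < m" "cc l = callf gr n (W j) (gr l)" using cc_in by blast
    have p1: "gr (l - 1) < gr l" "gr l < gr (l+1)" using gmono l by auto
    have "cc l * (gr (l + 1) - gr (l - 1)) \<le> callf gr n (W j) (gr (l-1)) * (gr (l + 1) - gr l) + callf gr n (W j) (gr (l+1)) * (gr l - gr (l - 1))"
      using call_grid_conv[of "W j" l] W_nn j l by simp
    also have "\<dots> \<le> cc (l - 1) * (gr (l + 1) - gr l) + cc (l + 1) * (gr l - gr (l - 1))"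
      using cc_ge[OF j(1)] p1 by (intro add_mono mult_right_mono) auto
    finally show "cc l * (gr (l + 1) - gr (l - 1)) \<le> cc (l - 1) * (gr (l + 1) - gr l) + cc (l + 1) * (gr l - gr (l - 1))" .
  qed
  show "cc 0 - cc 1 \<le> (gr 1 - gr 0) * 2"
  proof -
    obtain j where j: "j < m" "cc 0 = callf gr n (W j) (gr 0)" using cc_in by blast
    have "callf gr n (W j) (gr 0) - callf gr n (W j) (gr 1) = (gr 1 - gr 0) * (\<Sum>i\<in>{1..n}. W j i)"
      using call_tail[of 1 "W j"] n by simp
    also have "\<dots> \<le> (gr 1 - gr 0) * 2"
    proof -
      have "(\<Sum>i\<in>{1..n}. W j i) \<le> (\<Sum>i\<le>n. W j i)" using W_nn[OF j(1)] by (intro sum_mono2) auto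
      moreover have "0 \<le> gr 1 - gr 0" using gmono[of 0 1] n by simp
      ultimately show ?thesis using W_mass[OF j(1)] mult_left_mono by metis
    qed
    finally show ?thesis using cc_ge[OF j(1), of 1] j by simp
  qed
qed

definition vJ where "vJ = (SOME v. (\<forall>i\<le>n. 0 \<le> v i) \<and> (\<Sum>i\<le>n. v i) = 2 \<and> (\<forall>l\<le>n. callf gr n v (gr l) = cc l))"

lemma vJ: "\<forall>i\<le>n. 0 \<le> vJ i" "(\<Sum>i\<le>n. vJ i) = 2" "\<forall>l\<le>n. callf gr n vJ (gr l) = cc l"
  using someI_ex[OF join] unfolding vJ_def by auto

lemma vJ_mean: "(\<Sum>i\<le>n. vJ i * gr i) = 1"
proof -
  obtain j where "j < m" "cc 0 = callf gr n (W j) (gr 0)" using cc_in by blast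
  then have "cc 0 = 1" using W_call0 by simp
  then have "callf gr n vJ (gr 0) = 1" using vJ(3) by auto
  then show ?thesis using call_0[of vJ] gr0 by simp
qed

lemma hypo_j: "j < m \<Longrightarrow> hypo (W j) vJ"
  unfolding hypo_def using W_nn vJ W_mass W_mean vJ_mean cc_ge by auto

definition gam where "gam j = (SOME \<gamma>. coup (W j) vJ \<gamma>)"

lemma gam: "j < m \<Longrightarrow> coup (W j) vJ (gam j)"
  unfolding gam_def using strassen[OF hypo_j] by (rule someI_ex)

end


lemma PiE_fix:
  fixes Y :: "nat \<Rightarrow> 'y set" and f :: "nat \<Rightarrow> 'y \<Rightarrow> real"
  assumes "j < m" "c \<in> Y j" "\<forall>i<m. finite (Y i)"
  shows "(\<Sum>y \<in> {y \<in> PiE {..<m} Y. y j = c}. \<Prod>i<m. f i (y i)) = f j c * (\<Prod>i \<in> {..<m}-{j}. sum (f i) (Y i))"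
proof -
  have eq: "{y \<in> PiE {..<m} Y. y j = c} = PiE {..<m} (Y(j := {c}))"
  proof (intro set_eqI iffI)
    fix x assume "x \<in> {y \<in> PiE {..<m} Y. y j = c}"
    then show "x \<in> PiE {..<m} (Y(j := {c}))" unfolding PiE_iff by auto
  next
    fix x assume x: "x \<in> PiE {..<m} (Y(j := {c}))"
    then have e: "x \<in> extensional {..<m}" and a: "\<forall>i\<in>{..<m}. x i \<in> (Y(j := {c})) i" unfolding PiE_iff by auto
    have "x j = c" using a[rule_format, of j] assms(1) by simp
    moreover have "\<forall>i\<in>{..<m}. x i \<in> Y i"
    proof
      fix i assume "i \<in> {..<m}"
      then show "x i \<in> Y i" using a[rule_format, of i] assms by (cases "i = j") auto
    qed
    ultimately show "x \<in> {y \<in> PiE {..<m} Y. y j = c}" using e unfolding PiE_iff by auto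
  qed
  have "(\<Sum>y \<in> PiE {..<m} (Y(j := {c})). \<Prod>i<m. f i (y i)) = (\<Prod>i<m. sum (f i) ((Y(j := {c})) i))"
    by (rule prod_sum_PiE[symmetric]) (use assms in auto)
  also have "\<dots> = sum (f j) ((Y(j := {c})) j) * (\<Prod>i \<in> {..<m}-{j}. sum (f i) ((Y(j := {c})) i))"
    using assms by (subst prod.remove[of _ j]) auto
  also have "\<dots> = f j c * (\<Prod>i \<in> {..<m}-{j}. sum (f i) (Y i))"
    by (auto intro!: prod.cong)
  finally show ?thesis using eq by simp
qed

lemma PiE_all:
  fixes Y :: "nat \<Rightarrow> 'y set" and f :: "nat \<Rightarrow> 'y \<Rightarrow> real"
  assumes "\<forall>i<m. finite (Y i)"
  shows "(\<Sum>y \<in> PiE {..<m} Y. \<Prod>i<m. f i (y i)) = (\<Prod>i<m. sum (f i) (Y i))"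
  by (rule prod_sum_PiE[symmetric]) (use assms in auto)

context thm2 begin

lemma gr01: "i \<le> n \<Longrightarrow> 0 \<le> gr i \<and> gr i \<le> 1"
  using gmono_le[of 0 i] gmono_le[of i n] gr0 grn by auto

lemma gam_nn: "j < m \<Longrightarrow> 0 \<le> gam j i i'" using gam unfolding coup_def by blast
lemma gam_row: "j < m \<Longrightarrow> i \<le> n \<Longrightarrow> (\<Sum>i'\<le>n. gam j i i') = W j i" using gam unfolding coup_def by blast
lemma gam_col: "j < m \<Longrightarrow> i' \<le> n \<Longrightarrow> (\<Sum>i\<le>n. gam j i i') = vJ i'" using gam unfolding coup_def by blast
lemma gam_bar: "j < m \<Longrightarrow> i \<le> n \<Longrightarrow> (\<Sum>i'\<le>n. gam j i i' * gr i') = W j i * gr i" using gam unfolding coup_def by blast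

lemma gam_W0: assumes "j < m" "i \<le> n" "i' \<le> n" "W j i = 0" shows "gam j i i' = 0"
proof -
  have "(\<Sum>i'\<le>n. gam j i i') = 0" using gam_row assms by simp
  then have "\<forall>x\<in>{..n}. gam j i x = 0" using sum_nonneg_eq_0_iff[of "{..n}" "gam j i"] gam_nn assms by auto
  then show ?thesis using assms by auto
qed

lemma gam_v0: assumes "j < m" "i \<le> n" "i' \<le> n" "vJ i' = 0" shows "gam j i i' = 0"
proof -
  have "(\<Sum>i\<le>n. gam j i i') = 0" using gam_col assms by simp
  then have "\<forall>x\<in>{..n}. gam j x i' = 0" using sum_nonneg_eq_0_iff[of "{..n}" "\<lambda>x. gam j x i'"] gam_nn assms by auto
  then show ?thesis using assms by auto
qed

lemma wl_W0: assumes "j < m" "y \<in> Y j" "W j i = 0" shows "wj j y * lamj j y i = 0"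
proof -
  have "\<forall>x\<in>Y j. wj j x * lamj j x i = 0"
    using sum_nonneg_eq_0_iff[of "Y j" "\<lambda>x. wj j x * lamj j x i"] assms finY wj_nn lamj
    unfolding W_def splitp_def by auto
  then show ?thesis using assms by auto
qed

definition kap where "kap j i' y = (\<Sum>i\<le>n. (gam j i i' / vJ i') * (wj j y * lamj j y i / W j i))"

lemma kap_nn: "j < m \<Longrightarrow> y \<in> Y j \<Longrightarrow> i' \<le> n \<Longrightarrow> 0 \<le> kap j i' y"
  unfolding kap_def using gam_nn vJ(1) wj_nn lamj W_nn unfolding splitp_def
  by (auto intro!: sum_nonneg mult_nonneg_nonneg divide_nonneg_nonneg)

lemma kap_sum: assumes "j < m" "i' \<le> n" shows "(\<Sum>y\<in>Y j. kap j i' y) = (if vJ i' = 0 then 0 else 1)"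
proof -
  have "(\<Sum>y\<in>Y j. kap j i' y) = (\<Sum>i\<le>n. (gam j i i' / vJ i') * ((\<Sum>y\<in>Y j. wj j y * lamj j y i) / W j i))"
    unfolding kap_def by (simp add: sum.swap[of _ "Y j"] sum_distrib_left sum_divide_distrib)
  also have "\<dots> = (\<Sum>i\<le>n. gam j i i' / vJ i')"
  proof (rule sum.cong[OF refl])
    fix i assume i: "i \<in> {..n}"
    show "gam j i i' / vJ i' * ((\<Sum>y\<in>Y j. wj j y * lamj j y i) / W j i) = gam j i i' / vJ i'"
    proof (cases "W j i = 0")
      case True then show ?thesis using gam_W0 assms i by simp
    next
      case False then show ?thesis unfolding W_def[symmetric] by simp
    qed
  qed
  also have "\<dots> = (\<Sum>i\<le>n. gam j i i') / vJ i'" by (simp add: sum_divide_distrib)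
  also have "\<dots> = (if vJ i' = 0 then 0 else 1)" using gam_col assms by simp
  finally show ?thesis .
qed

definition Jt where "Jt \<theta> i' = vJ i' * (if \<theta> = (1::nat) then gr i' else 1 - gr i')"

lemma Jt_nn: "i' \<le> n \<Longrightarrow> 0 \<le> Jt \<theta> i'" unfolding Jt_def using vJ(1) gr01 by auto

lemma Jt_v0: "vJ i' = 0 \<Longrightarrow> Jt \<theta> i' = 0" unfolding Jt_def by simp

lemma Jt_sum: "\<theta> \<in> {1,2} \<Longrightarrow> (\<Sum>i'\<le>n. Jt \<theta> i') = 1"
  unfolding Jt_def using vJ(2) vJ_mean by (auto simp: algebra_simps sum_subtractf)

lemma marg_kap: assumes "j < m" "c \<in> Y j" "\<theta> \<in> {1,2}"
  shows "(\<Sum>i'\<le>n. Jt \<theta> i' * kap j i' c) = P j \<theta> c"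
proof -
  define K where "K i = wj j c * lamj j c i / W j i" for i
  have WK: "W j i * K i = wj j c * lamj j c i" for i
    unfolding K_def using wl_W0[OF assms(1,2)] by (cases "W j i = 0") auto
  define h where "h i' = (if \<theta> = 1 then gr i' else 1 - gr i')" for i'
  have "(\<Sum>i'\<le>n. Jt \<theta> i' * kap j i' c) = (\<Sum>i'\<le>n. \<Sum>i\<le>n. (vJ i' * h i') * ((gam j i i' / vJ i') * K i))"
    unfolding kap_def Jt_def K_def h_def by (simp add: sum_distrib_left)
  also have "\<dots> = (\<Sum>i'\<le>n. \<Sum>i\<le>n. K i * gam j i i' * h i')"
  proof (intro sum.cong refl)
    fix i' i assume "i' \<in> {..n}" "i \<in> {..n}"
    then have "vJ i' * (gam j i i' / vJ i') = gam j i i'" using gam_v0[OF assms(1)] by (cases "vJ i' = 0") auto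
    then show "(vJ i' * h i') * ((gam j i i' / vJ i') * K i) = K i * gam j i i' * h i'"
    proof -
      have "(vJ i' * h i') * ((gam j i i' / vJ i') * K i) = (vJ i' * (gam j i i' / vJ i')) * K i * h i'"
        by (simp only: mult_ac)
      then show ?thesis using \<open>vJ i' * (gam j i i' / vJ i') = gam j i i'\<close> by (simp only: mult_ac)
    qed
  qed
  also have "\<dots> = (\<Sum>i'\<le>n. \<Sum>i\<le>n. K i * (gam j i i' * h i'))"
    by (simp only: mult.assoc)
  also have "\<dots> = (\<Sum>i\<le>n. K i * (\<Sum>i'\<le>n. gam j i i' * h i'))"
    by (subst sum.swap) (simp only: sum_distrib_left)
  also have "\<dots> = (\<Sum>i\<le>n. K i * (W j i * h i))"
  proof (rule sum.cong[OF refl])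
    fix i assume i: "i \<in> {..n}"
    have "(\<Sum>i'\<le>n. gam j i i' * h i') = W j i * h i"
    proof (cases "\<theta> = 1")
      case True then show ?thesis unfolding h_def using gam_bar[OF assms(1), of i] i by simp
    next
      case False
      have "(\<Sum>i'\<le>n. gam j i i' * h i') = (\<Sum>i'\<le>n. gam j i i') - (\<Sum>i'\<le>n. gam j i i' * gr i')"
        unfolding h_def using False by (simp add: sum_subtractf[symmetric] right_diff_distrib)
      also have "\<dots> = W j i * h i" unfolding h_def using False gam_bar[OF assms(1), of i] gam_row[OF assms(1), of i] i
        by (simp add: right_diff_distrib)
      finally show ?thesis .
    qed
    then show "K i * (\<Sum>i'\<le>n. gam j i i' * h i') = K i * (W j i * h i)" by simp
  qed
  also have "\<dots> = (\<Sum>i\<le>n. wj j c * (lamj j c i * h i))"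
  proof (rule sum.cong[OF refl])
    fix i
    have "K i * (W j i * h i) = (W j i * K i) * h i" by (simp only: mult_ac)
    also have "\<dots> = wj j c * (lamj j c i * h i)" unfolding WK by (simp only: mult_ac)
    finally show "K i * (W j i * h i) = wj j c * (lamj j c i * h i)" .
  qed
  also have "\<dots> = wj j c * (\<Sum>i\<le>n. lamj j c i * h i)" by (simp only: sum_distrib_left)
  also have "\<dots> = wj j c * (if \<theta> = 1 then post j c else 1 - post j c)"
  proof (cases "\<theta> = 1")
    case True then show ?thesis unfolding h_def using lamj[OF assms(1,2)] unfolding splitp_def by simp
  next
    case False
    have "(\<Sum>i\<le>n. lamj j c i * h i) = (\<Sum>i\<le>n. lamj j c i) - (\<Sum>i\<le>n. lamj j c i * gr i)"
      unfolding h_def using False by (simp add: sum_subtractf[symmetric] right_diff_distrib)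
    then show ?thesis using False lamj[OF assms(1,2)] unfolding splitp_def by simp
  qed
  also have "\<dots> = P j \<theta> c"
  proof (cases "\<theta> = 1")
    case True then show ?thesis using wpost[OF assms(1,2)] by simp
  next
    case False then have "\<theta> = 2" using assms(3) by simp
    then show ?thesis using wpost[OF assms(1,2)] unfolding wj_def by (simp add: right_diff_distrib)
  qed
  finally show ?thesis .
qed

definition Qs where "Qs \<theta> y = (\<Sum>i'\<le>n. Jt \<theta> i' * (\<Prod>j<m. kap j i' (y j)))"

lemma prod_ind: "(\<Prod>j\<in>A. (if b then 0 else (1::real))) = (if b \<and> A \<noteq> {} \<and> finite A then 0 else 1)"
  by (cases "finite A") (auto simp: prod_zero)

lemma Qs_coupling: "Qs \<in> couplings {1,2} m Y P"
  unfolding couplings_def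
proof (intro CollectI ballI conjI allI impI)
  have fin: "\<forall>i<m. finite (Y i)" using finY by auto
  fix \<theta> :: nat assume th: "\<theta> \<in> {1,2}"
  show "is_dist (profiles m Y) (Qs \<theta>)"
    unfolding is_dist_def
  proof
    show "\<forall>y\<in>profiles m Y. 0 \<le> Qs \<theta> y"
      unfolding Qs_def profiles_def using Jt_nn kap_nn
      by (auto intro!: sum_nonneg mult_nonneg_nonneg prod_nonneg simp: PiE_iff)
    have "sum (Qs \<theta>) (profiles m Y) = (\<Sum>i'\<le>n. Jt \<theta> i' * (\<Sum>y\<in>profiles m Y. \<Prod>j<m. kap j i' (y j)))"
      unfolding Qs_def by (simp add: sum.swap[of _ "profiles m Y"] sum_distrib_left)
    also have "\<dots> = (\<Sum>i'\<le>n. Jt \<theta> i')"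
    proof (rule sum.cong[OF refl])
      fix i' assume i': "i' \<in> {..n}"
      have "(\<Sum>y\<in>profiles m Y. \<Prod>j<m. kap j i' (y j)) = (\<Prod>j<m. (if vJ i' = 0 then 0 else 1))"
        unfolding profiles_def using PiE_all[OF fin, of "\<lambda>j. kap j i'"] kap_sum i' by simp
      then show "Jt \<theta> i' * (\<Sum>y\<in>profiles m Y. \<Prod>j<m. kap j i' (y j)) = Jt \<theta> i'"
        using Jt_v0 m by (auto simp: prod_ind lessThan_empty_iff)
    qed
    also have "\<dots> = 1" using Jt_sum th by simp
    finally show "sum (Qs \<theta>) (profiles m Y) = 1" .
  qed
  fix j yj assume j: "j < m" and yj: "yj \<in> Y j"
  have "(\<Sum>y\<in>{y \<in> profiles m Y. y j = yj}. Qs \<theta> y) = (\<Sum>i'\<le>n. Jt \<theta> i' * (\<Sum>y\<in>{y \<in> profiles m Y. y j = yj}. \<Prod>j<m. kap j i' (y j)))"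
    unfolding Qs_def by (simp add: sum.swap[of _ "{y \<in> profiles m Y. y j = yj}"] sum_distrib_left)
  also have "\<dots> = (\<Sum>i'\<le>n. Jt \<theta> i' * kap j i' yj)"
  proof (rule sum.cong[OF refl])
    fix i' assume i': "i' \<in> {..n}"
    have "(\<Sum>y\<in>{y \<in> profiles m Y. y j = yj}. \<Prod>j<m. kap j i' (y j)) = kap j i' yj * (\<Prod>i\<in>{..<m}-{j}. (if vJ i' = 0 then 0 else 1))"
      unfolding profiles_def using PiE_fix[OF j yj fin, of "\<lambda>j. kap j i'"] kap_sum i' by simp
    then show "Jt \<theta> i' * (\<Sum>y\<in>{y \<in> profiles m Y. y j = yj}. \<Prod>j<m. kap j i' (y j)) = Jt \<theta> i' * kap j i' yj"
      using Jt_v0 by (auto simp: prod_ind)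
  qed
  also have "\<dots> = P j \<theta> yj" using marg_kap[OF j yj th] .
  finally show "(\<Sum>y\<in>{y \<in> profiles m Y. y j = yj}. Qs \<theta> y) = P j \<theta> yj" .
qed

end


lemma eu_abs: assumes "is_dist A \<alpha>" "finite A" shows "\<bar>eu A u \<theta> \<alpha>\<bar> \<le> (\<Sum>a\<in>A. \<bar>u \<theta> a\<bar>)"
proof -
  have a: "\<forall>a\<in>A. 0 \<le> \<alpha> a" and s: "sum \<alpha> A = 1" using assms unfolding is_dist_def by auto
  have le1: "\<forall>a\<in>A. \<alpha> a \<le> 1"
  proof
    fix a assume "a \<in> A"
    then have "\<alpha> a \<le> sum \<alpha> A" using a assms(2) by (intro member_le_sum) auto
    then show "\<alpha> a \<le> 1" using s by simp
  qed
  have "\<bar>eu A u \<theta> \<alpha>\<bar> \<le> (\<Sum>a\<in>A. \<bar>\<alpha> a * u \<theta> a\<bar>)" unfolding eu_def by (rule sum_abs)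
  also have "\<dots> \<le> (\<Sum>a\<in>A. \<bar>u \<theta> a\<bar>)"
  proof (rule sum_mono)
    fix a assume "a \<in> A"
    then have "\<bar>\<alpha> a\<bar> \<le> 1" using a le1 by auto
    then show "\<bar>\<alpha> a * u \<theta> a\<bar> \<le> \<bar>u \<theta> a\<bar>" by (simp add: abs_mult mult_left_le_one_le)
  qed
  finally show ?thesis .
qed

lemma payoff_abs:
  assumes Q: "Q \<in> couplings Th m Y P" and \<sigma>: "\<sigma> \<in> strategies A (profiles m Y)"
    and fin: "finite A" "finite Th" "\<forall>j<m. finite (Y j)"
  shows "\<bar>payoff Th A u (profiles m Y) Q \<sigma>\<bar> \<le> (\<Sum>\<theta>\<in>Th. \<Sum>a\<in>A. \<bar>u \<theta> a\<bar>)"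
proof -
  have finp: "finite (profiles m Y)" unfolding profiles_def using fin(3) by (intro finite_PiE) auto
  have Qd: "\<forall>\<theta>\<in>Th. is_dist (profiles m Y) (Q \<theta>)" using Q unfolding couplings_def by auto
  have sd: "\<forall>y\<in>profiles m Y. is_dist A (\<sigma> y)" using \<sigma> unfolding strategies_def by auto
  have "\<bar>payoff Th A u (profiles m Y) Q \<sigma>\<bar> \<le> (\<Sum>\<theta>\<in>Th. \<bar>\<Sum>y\<in>profiles m Y. Q \<theta> y * eu A u \<theta> (\<sigma> y)\<bar>)"
    unfolding payoff_def by (rule sum_abs)
  also have "\<dots> \<le> (\<Sum>\<theta>\<in>Th. \<Sum>a\<in>A. \<bar>u \<theta> a\<bar>)"
  proof (rule sum_mono)
    fix \<theta> assume th: "\<theta> \<in> Th"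
    have "\<bar>\<Sum>y\<in>profiles m Y. Q \<theta> y * eu A u \<theta> (\<sigma> y)\<bar> \<le> (\<Sum>y\<in>profiles m Y. \<bar>Q \<theta> y * eu A u \<theta> (\<sigma> y)\<bar>)"
      by (rule sum_abs)
    also have "\<dots> \<le> (\<Sum>y\<in>profiles m Y. Q \<theta> y * (\<Sum>a\<in>A. \<bar>u \<theta> a\<bar>))"
    proof (rule sum_mono)
      fix y assume y: "y \<in> profiles m Y"
      have q: "0 \<le> Q \<theta> y" using Qd th y unfolding is_dist_def by auto
      show "\<bar>Q \<theta> y * eu A u \<theta> (\<sigma> y)\<bar> \<le> Q \<theta> y * (\<Sum>a\<in>A. \<bar>u \<theta> a\<bar>)"
        using mult_left_mono[OF eu_abs[OF sd[rule_format, OF y] fin(1), of u \<theta>] q] q by (simp add: abs_mult)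
    qed
    also have "\<dots> = (\<Sum>a\<in>A. \<bar>u \<theta> a\<bar>)" using Qd th unfolding is_dist_def by (simp add: sum_distrib_right[symmetric])
    finally show "\<bar>\<Sum>y\<in>profiles m Y. Q \<theta> y * eu A u \<theta> (\<sigma> y)\<bar> \<le> (\<Sum>a\<in>A. \<bar>u \<theta> a\<bar>)" .
  qed
  finally show ?thesis .
qed

lemma guarantee_le:
  assumes "Q \<in> couplings Th m Y P" "\<sigma> \<in> strategies A (profiles m Y)"
    "finite A" "finite Th" "\<forall>j<m. finite (Y j)"
  shows "guarantee Th A u m Y P \<sigma> \<le> payoff Th A u (profiles m Y) Q \<sigma>"
  unfolding guarantee_def
proof (rule cINF_lower[OF _ assms(1)])
  show "bdd_below ((\<lambda>Q. payoff Th A u (profiles m Y) Q \<sigma>) ` couplings Th m Y P)"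
    unfolding bdd_below_def using payoff_abs[OF _ assms(2-5)]
    by (metis (no_types, lifting) abs_le_D2 imageE minus_le_iff)
qed

lemma guarantee_ge:
  assumes "couplings Th m Y P \<noteq> {}" "\<And>Q. Q \<in> couplings Th m Y P \<Longrightarrow> b \<le> payoff Th A u (profiles m Y) Q \<sigma>"
  shows "b \<le> guarantee Th A u m Y P \<sigma>"
  unfolding guarantee_def by (rule cINF_greatest) (use assms in auto)

lemma guarantee_abs:
  assumes "Q \<in> couplings Th m Y P" "\<sigma> \<in> strategies A (profiles m Y)"
    "finite A" "finite Th" "\<forall>j<m. finite (Y j)"
  shows "\<bar>guarantee Th A u m Y P \<sigma>\<bar> \<le> (\<Sum>\<theta>\<in>Th. \<Sum>a\<in>A. \<bar>u \<theta> a\<bar>)"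
proof -
  have "guarantee Th A u m Y P \<sigma> \<le> (\<Sum>\<theta>\<in>Th. \<Sum>a\<in>A. \<bar>u \<theta> a\<bar>)"
    using guarantee_le[OF assms, where u=u] payoff_abs[OF assms, where u=u] by (simp add: abs_le_iff)
  moreover have "- (\<Sum>\<theta>\<in>Th. \<Sum>a\<in>A. \<bar>u \<theta> a\<bar>) \<le> guarantee Th A u m Y P \<sigma>"
  proof (rule guarantee_ge)
    show "couplings Th m Y P \<noteq> {}" using assms(1) by auto
    fix Q' assume "Q' \<in> couplings Th m Y P"
    then have "\<bar>payoff Th A u (profiles m Y) Q' \<sigma>\<bar> \<le> (\<Sum>\<theta>\<in>Th. \<Sum>a\<in>A. \<bar>u \<theta> a\<bar>)"
      using payoff_abs[OF _ assms(2-5)] by blast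
    then show "- (\<Sum>\<theta>\<in>Th. \<Sum>a\<in>A. \<bar>u \<theta> a\<bar>) \<le> payoff Th A u (profiles m Y) Q' \<sigma>" by (simp add: abs_le_iff)
  qed
  ultimately show ?thesis by simp
qed

lemma Vrob_ge:
  assumes "Q \<in> couplings Th m Y P" "\<sigma> \<in> strategies A (profiles m Y)"
    "finite A" "finite Th" "\<forall>j<m. finite (Y j)"
  shows "guarantee Th A u m Y P \<sigma> \<le> Vrob Th A u m Y P"
  unfolding Vrob_def
proof (rule cSUP_upper[OF assms(2)])
  show "bdd_above (guarantee Th A u m Y P ` strategies A (profiles m Y))"
    unfolding bdd_above_def using guarantee_abs[OF assms(1) _ assms(3-5)]
    by (metis (no_types, lifting) abs_le_D1 imageE)
qed

lemma Vrob_le: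
  assumes "strategies A (profiles m Y) \<noteq> {}" "\<And>\<sigma>. \<sigma> \<in> strategies A (profiles m Y) \<Longrightarrow> guarantee Th A u m Y P \<sigma> \<le> b"
  shows "Vrob Th A u m Y P \<le> b"
  unfolding Vrob_def by (rule cSUP_least) (use assms in auto)

lemma eu01: "eu {0,1} (ustar u l) \<theta> \<alpha> = \<alpha> 1 * (u \<theta> (Suc l) - u \<theta> l)"
  unfolding eu_def ustar_def by simp


lemma V1_ge:
  assumes "finite Y" "finite Th" "finite A" "\<forall>\<theta>\<in>Th. is_dist Y (P \<theta>)" "\<forall>y\<in>Y. is_dist A (\<tau> y)"
  shows "(\<Sum>\<theta>\<in>Th. \<Sum>y\<in>Y. P \<theta> y * eu A u \<theta> (\<tau> y)) \<le> V1 Th A u Y P"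
  unfolding V1_def
proof (rule cSUP_upper)
  show "\<tau> \<in> {\<sigma>. \<forall>y\<in>Y. is_dist A (\<sigma> y)}" using assms by auto
  show "bdd_above ((\<lambda>\<sigma>. \<Sum>\<theta>\<in>Th. \<Sum>y\<in>Y. P \<theta> y * eu A u \<theta> (\<sigma> y)) ` {\<sigma>. \<forall>y\<in>Y. is_dist A (\<sigma> y)})"
    unfolding bdd_above_def
  proof (intro exI ballI)
    fix x assume "x \<in> (\<lambda>\<sigma>. \<Sum>\<theta>\<in>Th. \<Sum>y\<in>Y. P \<theta> y * eu A u \<theta> (\<sigma> y)) ` {\<sigma>. \<forall>y\<in>Y. is_dist A (\<sigma> y)}"
    then obtain \<sigma> where s: "\<forall>y\<in>Y. is_dist A (\<sigma> y)" and x: "x = (\<Sum>\<theta>\<in>Th. \<Sum>y\<in>Y. P \<theta> y * eu A u \<theta> (\<sigma> y))" by auto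
    have "x \<le> (\<Sum>\<theta>\<in>Th. \<Sum>y\<in>Y. P \<theta> y * (\<Sum>a\<in>A. \<bar>u \<theta> a\<bar>))"
      unfolding x
    proof (intro sum_mono)
      fix \<theta> y assume th: "\<theta> \<in> Th" and y: "y \<in> Y"
      have p: "0 \<le> P \<theta> y" using assms(4) th y unfolding is_dist_def by auto
      have "eu A u \<theta> (\<sigma> y) \<le> (\<Sum>a\<in>A. \<bar>u \<theta> a\<bar>)" using eu_abs[OF s[rule_format, OF y] assms(3), of u \<theta>] by (simp add: abs_le_iff)
      then show "P \<theta> y * eu A u \<theta> (\<sigma> y) \<le> P \<theta> y * (\<Sum>a\<in>A. \<bar>u \<theta> a\<bar>)" using p by (rule mult_left_mono)
    qed
    then show "x \<le> (\<Sum>\<theta>\<in>Th. \<Sum>y\<in>Y. P \<theta> y * (\<Sum>a\<in>A. \<bar>u \<theta> a\<bar>))" .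
  qed
qed

lemma max0_mult: "0 \<le> (c::real) \<Longrightarrow> max 0 (c * x) = c * max 0 x"
proof (cases "0 \<le> x")
  case True
  assume "0 \<le> c" then have "0 \<le> c * x" using True by simp
  then show ?thesis using True by simp
next
  case False
  assume "0 \<le> c" then have "c * x \<le> 0" using False by (simp add: mult_nonneg_nonpos)
  then show ?thesis using False by simp
qed

context thm2 begin

lemma u_tele: assumes "\<theta> \<in> {1,2}" "a \<in> {1..n}" shows "u \<theta> a = (\<Sum>l\<in>{1..<a}. u \<theta> (Suc l) - u \<theta> l)"
  using sum_Suc_diff'[of 1 a "u \<theta>"] assms norm by auto

definition Bv where "Bv i' = (\<Sum>l\<in>{1..<n}. max 0 (Jt 1 i' * d1 l + Jt 2 i' * d2 l))"

lemma Bv_nn: "0 \<le> Bv i'" unfolding Bv_def by (auto intro: sum_nonneg)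

lemma val_le_Bv: assumes "a \<in> {1..n}" shows "Jt 1 i' * u 1 a + Jt 2 i' * u 2 a \<le> Bv i'"
proof -
  have "Jt 1 i' * u 1 a + Jt 2 i' * u 2 a = (\<Sum>l\<in>{1..<a}. Jt 1 i' * d1 l + Jt 2 i' * d2 l)"
    using u_tele[of 1 a] u_tele[of 2 a] assms unfolding d1_def d2_def
    by (simp add: sum_distrib_left sum.distrib)
  also have "\<dots> \<le> (\<Sum>l\<in>{1..<a}. max 0 (Jt 1 i' * d1 l + Jt 2 i' * d2 l))" by (intro sum_mono) auto
  also have "\<dots> \<le> Bv i'" unfolding Bv_def using assms by (intro sum_mono2) auto
  finally show ?thesis .
qed

lemma sum_prod_kap: assumes "i' \<le> n" shows "0 \<le> (\<Sum>y\<in>profiles m Y. \<Prod>j<m. kap j i' (y j))" "(\<Sum>y\<in>profiles m Y. \<Prod>j<m. kap j i' (y j)) \<le> 1"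
proof -
  have fin: "\<forall>i<m. finite (Y i)" using finY by auto
  have e: "(\<Sum>y\<in>profiles m Y. \<Prod>j<m. kap j i' (y j)) = (\<Prod>j<m. (if vJ i' = 0 then 0 else 1))"
    unfolding profiles_def using PiE_all[OF fin, of "\<lambda>j. kap j i'"] kap_sum assms by simp
  show "0 \<le> (\<Sum>y\<in>profiles m Y. \<Prod>j<m. kap j i' (y j))" "(\<Sum>y\<in>profiles m Y. \<Prod>j<m. kap j i' (y j)) \<le> 1"
    unfolding e using m by (auto simp: prod_ind power_0_left)
qed

lemma payoff_Qs:
  assumes \<sigma>: "\<sigma> \<in> strategies {1..n} (profiles m Y)"
  shows "payoff {1,2} {1..n} u (profiles m Y) Qs \<sigma> \<le> (\<Sum>i'\<le>n. Bv i')"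
proof -
  define Pr where "Pr y i' = (\<Prod>j<m. kap j i' (y j))" for y i'
  have Prnn: "0 \<le> Pr y i'" if "y \<in> profiles m Y" "i' \<le> n" for y i'
    unfolding Pr_def using kap_nn that unfolding profiles_def by (auto intro!: prod_nonneg simp: PiE_iff)
  have "payoff {1,2} {1..n} u (profiles m Y) Qs \<sigma> = (\<Sum>y\<in>profiles m Y. Qs 1 y * eu {1..n} u 1 (\<sigma> y) + Qs 2 y * eu {1..n} u 2 (\<sigma> y))"
    unfolding payoff_def by (simp add: sum.distrib)
  also have "\<dots> \<le> (\<Sum>y\<in>profiles m Y. \<Sum>i'\<le>n. Pr y i' * Bv i')"
  proof (rule sum_mono)
    fix y assume y: "y \<in> profiles m Y"
    have sd: "is_dist {1..n} (\<sigma> y)" using \<sigma> y unfolding strategies_def by auto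
    have "Qs 1 y * eu {1..n} u 1 (\<sigma> y) + Qs 2 y * eu {1..n} u 2 (\<sigma> y) = (\<Sum>i'\<le>n. Pr y i' * (Jt 1 i' * eu {1..n} u 1 (\<sigma> y) + Jt 2 i' * eu {1..n} u 2 (\<sigma> y)))"
      unfolding Qs_def Pr_def by (simp add: sum_distrib_right sum_distrib_left sum.distrib algebra_simps)
    also have "\<dots> \<le> (\<Sum>i'\<le>n. Pr y i' * Bv i')"
    proof (rule sum_mono)
      fix i' assume i': "i' \<in> {..n}"
      have "Jt 1 i' * eu {1..n} u 1 (\<sigma> y) + Jt 2 i' * eu {1..n} u 2 (\<sigma> y) = (\<Sum>a\<in>{1..n}. \<sigma> y a * (Jt 1 i' * u 1 a + Jt 2 i' * u 2 a))"
        unfolding eu_def by (simp add: sum_distrib_left sum.distrib algebra_simps)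
      also have "\<dots> \<le> (\<Sum>a\<in>{1..n}. \<sigma> y a * Bv i')"
        using sd val_le_Bv unfolding is_dist_def by (intro sum_mono mult_left_mono) auto
      also have "\<dots> = Bv i'" using sd unfolding is_dist_def by (simp add: sum_distrib_right[symmetric])
      finally show "Pr y i' * (Jt 1 i' * eu {1..n} u 1 (\<sigma> y) + Jt 2 i' * eu {1..n} u 2 (\<sigma> y)) \<le> Pr y i' * Bv i'"
        using Prnn[OF y] i' by (simp add: mult_left_mono)
    qed
    finally show "Qs 1 y * eu {1..n} u 1 (\<sigma> y) + Qs 2 y * eu {1..n} u 2 (\<sigma> y) \<le> (\<Sum>i'\<le>n. Pr y i' * Bv i')" .
  qed
  also have "\<dots> = (\<Sum>i'\<le>n. Bv i' * (\<Sum>y\<in>profiles m Y. Pr y i'))"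
    by (subst sum.swap) (simp add: sum_distrib_left mult.commute)
  also have "\<dots> \<le> (\<Sum>i'\<le>n. Bv i')"
  proof (rule sum_mono)
    fix i' assume "i' \<in> {..n}"
    then have "(\<Sum>y\<in>profiles m Y. Pr y i') \<le> 1" using sum_prod_kap unfolding Pr_def by auto
    then show "Bv i' * (\<Sum>y\<in>profiles m Y. Pr y i') \<le> Bv i'" using Bv_nn[of i'] by (simp add: mult_left_le)
  qed
  finally show ?thesis .
qed

lemma Bv_sum: "(\<Sum>i'\<le>n. Bv i') = (\<Sum>l\<in>{1..<n}. (d1 l - d2 l) * cc l)"
proof -
  have "(\<Sum>i'\<le>n. Bv i') = (\<Sum>l\<in>{1..<n}. \<Sum>i'\<le>n. max 0 (Jt 1 i' * d1 l + Jt 2 i' * d2 l))"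
    unfolding Bv_def by (rule sum.swap)
  also have "\<dots> = (\<Sum>l\<in>{1..<n}. (d1 l - d2 l) * cc l)"
  proof (rule sum.cong[OF refl])
    fix l assume l: "l \<in> {1..<n}"
    have dd: "0 < d1 l - d2 l" using d1pos d2neg l by force
    have "(\<Sum>i'\<le>n. max 0 (Jt 1 i' * d1 l + Jt 2 i' * d2 l)) = (\<Sum>i'\<le>n. (d1 l - d2 l) * (vJ i' * max 0 (gr i' - gr l)))"
    proof (rule sum.cong[OF refl])
      fix i' assume i': "i' \<in> {..n}"
      have "Jt 1 i' * d1 l + Jt 2 i' * d2 l = vJ i' * (gr i' * (d1 l - d2 l) + d2 l)"
        unfolding Jt_def by (simp add: algebra_simps)
      also have "\<dots> = ((d1 l - d2 l) * vJ i') * (gr i' - gr l)"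
      proof -
        have t: "gr l * d1 l - gr l * d2 l = - d2 l" using gr_thr[of l] l by (simp add: right_diff_distrib)
        have "(d1 l - d2 l) * (gr i' - gr l) = gr i' * (d1 l - d2 l) - (gr l * d1 l - gr l * d2 l)" by (simp add: algebra_simps)
        then have "(d1 l - d2 l) * (gr i' - gr l) = gr i' * (d1 l - d2 l) + d2 l" using t by simp
        then show ?thesis by (simp add: mult.commute mult.left_commute)
      qed
      finally have e: "Jt 1 i' * d1 l + Jt 2 i' * d2 l = ((d1 l - d2 l) * vJ i') * (gr i' - gr l)" .
      have "0 \<le> (d1 l - d2 l) * vJ i'" using dd vJ(1) i' by simp
      then show "max 0 (Jt 1 i' * d1 l + Jt 2 i' * d2 l) = (d1 l - d2 l) * (vJ i' * max 0 (gr i' - gr l))"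
        unfolding e max0_mult[OF \<open>0 \<le> (d1 l - d2 l) * vJ i'\<close>] by (simp add: mult.assoc)
    qed
    also have "\<dots> = (d1 l - d2 l) * callf gr n vJ (gr l)" unfolding callf_def by (simp add: sum_distrib_left)
    also have "\<dots> = (d1 l - d2 l) * cc l" using vJ(3) l by simp
    finally show "(\<Sum>i'\<le>n. max 0 (Jt 1 i' * d1 l + Jt 2 i' * d2 l)) = (d1 l - d2 l) * cc l" .
  qed
  finally show ?thesis .
qed

definition Vmax where "Vmax l = Max ((\<lambda>j. V1 {1,2} {0,1} (ustar u l) (Y j) (P j)) ` {..<m})"

lemma cc_le_V1: assumes l: "l \<in> {1..<n}" shows "(d1 l - d2 l) * cc l \<le> Vmax l"
proof -
  obtain j where j: "j < m" "cc l = callf gr n (W j) (gr l)" using cc_in by blast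
  have dd: "0 < d1 l - d2 l" using d1pos d2neg l by force
  have lK: "l \<le> n" using l by simp
  have "(d1 l - d2 l) * cc l = (\<Sum>y\<in>Y j. (d1 l - d2 l) * max 0 (P j 1 y - gr l * wj j y))"
    using j W_call[OF j(1) lK] by (simp add: sum_distrib_left)
  also have "\<dots> = (\<Sum>y\<in>Y j. max 0 (P j 1 y * d1 l + P j 2 y * d2 l))"
  proof (rule sum.cong[OF refl])
    fix y
    have "(d1 l - d2 l) * (P j 1 y - gr l * wj j y) = P j 1 y * d1 l + P j 2 y * d2 l"
    proof -
      have "(d1 l - d2 l) * (P j 1 y - gr l * wj j y) = (d1 l - d2 l) * P j 1 y - (gr l * (d1 l - d2 l)) * wj j y"
        by (simp add: algebra_simps)
      also have "\<dots> = P j 1 y * d1 l + P j 2 y * d2 l"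
      proof -
        have g: "gr l * (d1 l - d2 l) = - d2 l" using gr_thr l by auto
        show ?thesis unfolding g wj_def by (simp add: algebra_simps)
      qed
      finally show ?thesis .
    qed
    then show "(d1 l - d2 l) * max 0 (P j 1 y - gr l * wj j y) = max 0 (P j 1 y * d1 l + P j 2 y * d2 l)"
      using dd by (metis max_mult_distrib_left mult_zero_right order_less_imp_le)
  qed
  also have "\<dots> = (\<Sum>\<theta>\<in>{1,2}. \<Sum>y\<in>Y j. P j \<theta> y * eu {0,1} (ustar u l) \<theta>
       ((\<lambda>y a. if a = 1 then (if P j 1 y * d1 l + P j 2 y * d2 l > 0 then 1 else 0) else 1 - (if P j 1 y * d1 l + P j 2 y * d2 l > 0 then 1 else 0)) y))"
    unfolding eu01 d1_def d2_def by (simp add: sum.distrib[symmetric] algebra_simps) (rule sum.cong, auto simp: algebra_simps)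
  also have "\<dots> \<le> V1 {1,2} {0,1} (ustar u l) (Y j) (P j)"
    by (rule V1_ge) (use finY[OF j(1)] exps j(1) in \<open>auto simp: is_experiment_def is_dist_def\<close>)
  also have "\<dots> \<le> Vmax l" unfolding Vmax_def using j(1) by (intro Max_ge) auto
  finally show ?thesis .
qed

lemma upper: "Vrob {1,2} {1..n} u m Y P \<le> (\<Sum>l\<in>{1..<n}. Vmax l)"
proof (rule Vrob_le)
  have "(\<lambda>y a. if a = 1 then 1 else 0) \<in> strategies {1..n} (profiles m Y)"
    unfolding strategies_def is_dist_def using n by auto
  then show "strategies {1..n} (profiles m Y) \<noteq> {}" by auto
  fix \<sigma> assume \<sigma>: "\<sigma> \<in> strategies {1..n} (profiles m Y)"
  have "guarantee {1,2} {1..n} u m Y P \<sigma> \<le> payoff {1,2} {1..n} u (profiles m Y) Qs \<sigma>"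
    by (rule guarantee_le[OF Qs_coupling \<sigma>]) (use finY in auto)
  also have "\<dots> \<le> (\<Sum>i'\<le>n. Bv i')" by (rule payoff_Qs[OF \<sigma>])
  also have "\<dots> \<le> (\<Sum>l\<in>{1..<n}. Vmax l)" unfolding Bv_sum by (intro sum_mono cc_le_V1)
  finally show "guarantee {1,2} {1..n} u m Y P \<sigma> \<le> (\<Sum>l\<in>{1..<n}. Vmax l)" .
qed

end


lemma abel:
  fixes f U :: "nat \<Rightarrow> real"
  assumes "1 \<le> N"
  shows "(\<Sum>a\<in>{1..N}. (f (a-1) - f a) * U a) = (\<Sum>l\<in>{1..<N}. f l * (U (Suc l) - U l)) + f 0 * U 1 - f N * U N"
  using assms
proof (induction N rule: nat_induct_at_least)
  case base then show ?case by (simp add: algebra_simps)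
next
  case (Suc N)
  have "(\<Sum>a\<in>{1..Suc N}. (f (a-1) - f a) * U a) = (\<Sum>a\<in>{1..N}. (f (a-1) - f a) * U a) + (f N - f (Suc N)) * U (Suc N)"
    using Suc by simp
  moreover have "(\<Sum>l\<in>{1..<Suc N}. f l * (U (Suc l) - U l)) = (\<Sum>l\<in>{1..<N}. f l * (U (Suc l) - U l)) + f N * (U (Suc N) - U N)"
    using Suc by simp
  ultimately show ?case using Suc by (simp add: algebra_simps)
qed

lemma tele_min:
  fixes d Pre :: "nat \<Rightarrow> real" and X :: real
  assumes "0 \<le> X" "Pre 1 = 0" "\<And>l. 1 \<le> l \<Longrightarrow> Pre (Suc l) = Pre l + d l" "\<And>l. 0 < d l" "1 \<le> L"
  shows "(\<Sum>l\<in>{1..<L}. min (d l) (max 0 (X - Pre l))) = min X (Pre L)"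
  using assms(5)
proof (induction L rule: nat_induct_at_least)
  case base then show ?case using assms by simp
next
  case (Suc L)
  have "(\<Sum>l\<in>{1..<Suc L}. min (d l) (max 0 (X - Pre l))) = min X (Pre L) + min (d L) (max 0 (X - Pre L))"
    using Suc by simp
  also have "\<dots> = min X (Pre (Suc L))" using assms(3)[OF Suc(1)] assms(4)[of L] by (simp add: min_def max_def)
  finally show ?case .
qed

context thm2 begin

definition tt where "tt l = gr l / (1 - gr l)"

lemma d2_tt: assumes "1 \<le> l" "l < n" shows "d2 l = - tt l * d1 l"
proof -
  have g: "gr l * (d1 l - d2 l) = - d2 l" using gr_thr assms by simp
  have gl: "gr l < 1" using gmono[of l n] grn assms by simp
  have "tt l * d1 l * (1 - gr l) = gr l * d1 l" unfolding tt_def using gl by simp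
  also have "\<dots> = - d2 l * (1 - gr l)" using g by (simp add: algebra_simps)
  finally have "tt l * d1 l * (1 - gr l) = - d2 l * (1 - gr l)" .
  moreover have ne: "1 - gr l \<noteq> 0" using gl by simp
  ultimately have "tt l * d1 l = - d2 l" using mult_right_cancel[OF ne] by blast
  then show ?thesis by simp
qed

lemma tt_mono: assumes "l \<le> l'" "l' < n" shows "tt l \<le> tt l'"
proof -
  have "gr l \<le> gr l'" using gmono_le assms by simp
  moreover have "gr l' < 1" using gmono[of l' n] grn assms by simp
  ultimately show ?thesis unfolding tt_def by (simp add: divide_simps) (simp add: algebra_simps)
qed

lemma zono:
  assumes p: "\<forall>l\<in>{1..<n}. 0 \<le> p l \<and> p l \<le> 1"
  shows "\<exists>\<alpha>. is_dist {1..n} \<alpha> \<and> (\<forall>\<theta>\<in>{1,2}. (\<Sum>l\<in>{1..<n}. p l * (u \<theta> (Suc l) - u \<theta> l)) \<le> eu {1..n} u \<theta> \<alpha>)"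
proof -
  define X where "X = (\<Sum>l\<in>{1..<n}. p l * d1 l)"
  define dd where "dd l = (if 1 \<le> l \<and> l < n then d1 l else 1)" for l
  have ddpos: "0 < dd l" for l unfolding dd_def using d1pos by auto
  define Pre where "Pre L = (\<Sum>l\<in>{1..<L}. dd l)" for L
  have Pre1: "Pre 1 = 0" unfolding Pre_def by simp
  have PreS: "Pre (Suc l) = Pre l + dd l" if "1 \<le> l" for l
    unfolding Pre_def using that by (simp add: atLeastLessThanSuc)
  have Pre_mono: "Pre a \<le> Pre b" if "a \<le> b" for a b
    unfolding Pre_def using ddpos that by (intro sum_mono2) (auto intro: less_imp_le)
  have X0: "0 \<le> X" unfolding X_def
  proof (rule sum_nonneg)
    fix l assume l: "l \<in> {1..<n}"
    then show "0 \<le> p l * d1 l" using p d1pos[of l] by simp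
  qed
  have Xle: "X \<le> Pre n"
    unfolding X_def Pre_def dd_def using p d1pos by (intro sum_mono) (auto simp: mult_left_le_one_le)
  define q where "q l = min 1 (max 0 ((X - Pre l) / dd l))" for l
  have q01: "0 \<le> q l" "q l \<le> 1" for l unfolding q_def by auto
  have qd: "q l * dd l = min (dd l) (max 0 (X - Pre l))" for l
  proof -
    have "q l * dd l = min (1 * dd l) (max 0 ((X - Pre l) / dd l) * dd l)"
      unfolding q_def using ddpos[of l] by (simp add: min_mult_distrib_right)
    also have "\<dots> = min (dd l) (max 0 (X - Pre l))"
      using ddpos[of l] by (simp add: max_mult_distrib_right)
    finally show ?thesis .
  qed
  have sumq: "(\<Sum>l\<in>{1..<n}. q l * d1 l) = X"
  proof -
    have "(\<Sum>l\<in>{1..<n}. q l * d1 l) = (\<Sum>l\<in>{1..<n}. q l * dd l)" unfolding dd_def by auto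
    also have "\<dots> = (\<Sum>l\<in>{1..<n}. min (dd l) (max 0 (X - Pre l)))" unfolding qd ..
    also have "\<dots> = min X (Pre n)" using tele_min[OF X0 Pre1 PreS ddpos n] .
    also have "\<dots> = X" using Xle by simp
    finally show ?thesis .
  qed
  have qzero: "q l' = 0" if "q l < 1" "l < l'" "1 \<le> l" for l l'
  proof -
    have "(X - Pre l) / dd l < 1" using that(1) unfolding q_def by (auto simp: min_def max_def split: if_splits)
    then have "X < Pre (Suc l)" using ddpos[of l] PreS[OF that(3)] by (simp add: divide_less_eq)
    also have "\<dots> \<le> Pre l'" using that Pre_mono by simp
    finally have "X - Pre l' < 0" by simp
    then have "(X - Pre l') / dd l' < 0" using ddpos[of l'] by (simp add: divide_neg_pos)
    then show ?thesis unfolding q_def by simp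
  qed
  have qmono: "q l' \<le> q l" if "l \<le> l'" "1 \<le> l" for l l'
  proof (cases "q l < 1")
    case True
    show ?thesis
    proof (cases "l = l'")
      case False then show ?thesis using qzero[OF True _ that(2)] that q01 by simp
    qed simp
  next
    case False then show ?thesis using q01[of l'] by simp
  qed
  define q' where "q' l = (if l = 0 then 1 else if l < n then q l else 0)" for l
  have q'mono: "q' (Suc l) \<le> q' l" for l
  proof (cases "l = 0")
    case True then show ?thesis unfolding q'_def using q01 by auto
  next
    case False then show ?thesis unfolding q'_def using qmono[of l "Suc l"] q01 by auto
  qed
  define \<alpha> where "\<alpha> a = q' (a - 1) - q' a" for a
  have dist: "is_dist {1..n} \<alpha>"
    unfolding is_dist_def
  proof
    show "\<forall>a\<in>{1..n}. 0 \<le> \<alpha> a"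
    proof
      fix a assume "a \<in> {1..n}"
      then have "a = Suc (a - 1)" by simp
      then have "q' a \<le> q' (a - 1)" using q'mono[of "a-1"] by simp
      then show "0 \<le> \<alpha> a" unfolding \<alpha>_def by simp
    qed
    have "sum \<alpha> {1..n} = sum \<alpha> {Suc 0..Suc (n-1)}" using n by simp
    also have "\<dots> = (\<Sum>i=0..n-1. q' i - q' (Suc i))" unfolding sum.shift_bounds_cl_Suc_ivl \<alpha>_def by simp
    also have "\<dots> = - (\<Sum>i=0..n-1. q' (Suc i) - q' i)" by (simp add: sum_negf[symmetric])
    also have "\<dots> = q' 0 - q' n" using sum_Suc_diff[of 0 "n-1" q'] n by simp
    also have "\<dots> = 1" unfolding q'_def using n by simp
    finally show "sum \<alpha> {1..n} = 1" .
  qed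
  have euq: "eu {1..n} u \<theta> \<alpha> = (\<Sum>l\<in>{1..<n}. q l * (u \<theta> (Suc l) - u \<theta> l))" if th: "\<theta> \<in> {1,2}" for \<theta>
  proof -
    have "eu {1..n} u \<theta> \<alpha> = (\<Sum>a\<in>{1..n}. (q' (a-1) - q' a) * u \<theta> a)" unfolding eu_def \<alpha>_def ..
    also have "\<dots> = (\<Sum>l\<in>{1..<n}. q' l * (u \<theta> (Suc l) - u \<theta> l)) + q' 0 * u \<theta> 1 - q' n * u \<theta> n"
      by (rule abel[OF n])
    also have "\<dots> = (\<Sum>l\<in>{1..<n}. q l * (u \<theta> (Suc l) - u \<theta> l))"
      using th norm n unfolding q'_def by auto
    finally show ?thesis .
  qed
  have dom1: "(\<Sum>l\<in>{1..<n}. p l * (u 1 (Suc l) - u 1 l)) \<le> eu {1..n} u 1 \<alpha>"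
    using euq[of 1] sumq unfolding X_def d1_def by simp
  have dom2: "(\<Sum>l\<in>{1..<n}. p l * (u 2 (Suc l) - u 2 l)) \<le> eu {1..n} u 2 \<alpha>"
  proof -
    define e where "e l = (q l - p l) * d1 l" for l
    have se: "(\<Sum>l\<in>{1..<n}. e l) = 0" unfolding e_def using sumq unfolding X_def
      by (simp add: left_diff_distrib sum_subtractf)
    have key: "(\<Sum>l\<in>{1..<n}. tt l * e l) \<le> 0"
    proof (cases "n = 1")
      case True then show ?thesis by simp
    next
      case False
      then have n2: "2 \<le> n" using n by simp
      obtain s where s: "s \<in> {1..<n}" and sl: "\<forall>l\<in>{1..<n}. l < s \<longrightarrow> q l = 1" and sg: "\<forall>l\<in>{1..<n}. s < l \<longrightarrow> q l = 0"
      proof (cases "\<exists>l\<in>{1..<n}. q l < 1")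
        case True
        define s where "s = (LEAST l. l \<in> {1..<n} \<and> q l < 1)"
        have sP: "s \<in> {1..<n} \<and> q s < 1" unfolding s_def using True by (metis (mono_tags, lifting) LeastI)
        have "\<forall>l\<in>{1..<n}. l < s \<longrightarrow> q l = 1"
        proof (intro ballI impI)
          fix l assume "l \<in> {1..<n}" "l < s"
          then have "\<not> q l < 1" using not_less_Least[of l "\<lambda>l. l \<in> {1..<n} \<and> q l < 1"] unfolding s_def by auto
          then show "q l = 1" using q01[of l] by simp
        qed
        moreover have "\<forall>l\<in>{1..<n}. s < l \<longrightarrow> q l = 0" using qzero sP by auto
        ultimately show ?thesis using that sP by blast
      next
        case False
        then have "\<forall>l\<in>{1..<n}. q l = 1" using q01 by (meson not_less order_antisym)
        moreover have "n - 1 \<in> {1..<n}" using n2 by auto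
        ultimately have "\<forall>l\<in>{1..<n}. l < n-1 \<longrightarrow> q l = 1" "\<forall>l\<in>{1..<n}. n-1 < l \<longrightarrow> q l = 0" "n - 1 \<in> {1..<n}"
          by auto
        then show ?thesis using that[of "n-1"] by blast
      qed
      have "(\<Sum>l\<in>{1..<n}. tt l * e l) = (\<Sum>l\<in>{1..<n}. (tt l - tt s) * e l) + tt s * (\<Sum>l\<in>{1..<n}. e l)"
        by (simp add: algebra_simps sum.distrib sum_distrib_left sum_subtractf)
      also have "\<dots> \<le> 0"
      proof -
        have "(\<Sum>l\<in>{1..<n}. (tt l - tt s) * e l) \<le> 0"
        proof (rule sum_nonpos)
          fix l assume l: "l \<in> {1..<n}"
          have dpos: "0 < d1 l" using d1pos l by auto
          consider "l < s" | "l = s" | "s < l" by linarith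
          then show "(tt l - tt s) * e l \<le> 0"
          proof cases
            case 1
            then have "e l \<ge> 0" unfolding e_def using sl l p dpos by simp
            moreover have "tt l \<le> tt s" using tt_mono 1 s by simp
            ultimately show ?thesis by (simp add: mult_nonpos_nonneg)
          next
            case 2 then show ?thesis by simp
          next
            case 3
            then have "e l \<le> 0" unfolding e_def using sg l p dpos by (simp add: mult_nonpos_nonneg)
            moreover have "tt s \<le> tt l" using tt_mono 3 l by simp
            ultimately show ?thesis by (simp add: mult_nonneg_nonpos)
          qed
        qed
        then show ?thesis using se by simp
      qed
      finally show ?thesis .
    qed
    have "(\<Sum>l\<in>{1..<n}. p l * (u 2 (Suc l) - u 2 l)) = (\<Sum>l\<in>{1..<n}. q l * (u 2 (Suc l) - u 2 l)) + (\<Sum>l\<in>{1..<n}. tt l * e l)"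
    proof -
      have "(\<Sum>l\<in>{1..<n}. p l * (u 2 (Suc l) - u 2 l)) = (\<Sum>l\<in>{1..<n}. q l * (u 2 (Suc l) - u 2 l) + tt l * e l)"
      proof (rule sum.cong[OF refl])
        fix l assume l: "l \<in> {1..<n}"
        have D: "u 2 (Suc l) - u 2 l = - tt l * d1 l" using d2_tt l unfolding d2_def by auto
        show "p l * (u 2 (Suc l) - u 2 l) = q l * (u 2 (Suc l) - u 2 l) + tt l * e l"
          unfolding D e_def by (simp add: algebra_simps)
      qed
      then show ?thesis by (simp add: sum.distrib)
    qed
    then show ?thesis using key euq[of 2] by simp
  qed
  show ?thesis using dist dom1 dom2 by auto
qed

end


context thm2 begin

lemma ropt_strat: "l \<in> {1..<n} \<Longrightarrow> \<sigma>s l \<in> strategies {0,1} (profiles m Y)"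
  using ropt unfolding robustly_optimal_def by blast

lemma ropt_val: "l \<in> {1..<n} \<Longrightarrow> guarantee {1,2} {0,1} (ustar u l) m Y P (\<sigma>s l) = Vrob {1,2} {0,1} (ustar u l) m Y P"
  using ropt unfolding robustly_optimal_def by blast

lemma dist01: fixes \<alpha> :: "nat \<Rightarrow> real" assumes "is_dist {0,1} \<alpha>" shows "0 \<le> \<alpha> 1 \<and> \<alpha> 1 \<le> (1::real)"
proof -
  have "0 \<le> \<alpha> 0" "0 \<le> \<alpha> 1" "\<alpha> 0 + \<alpha> 1 = 1" using assms unfolding is_dist_def by auto
  then show ?thesis by linarith
qed

lemma sigma_exists: "\<exists>\<sigma>\<in>strategies {1..n} (profiles m Y).
            \<forall>y\<in>profiles m Y. \<forall>\<theta>\<in>{1,2}.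
              eu {1..n} u \<theta> (\<sigma> y) \<ge> (\<Sum>l\<in>{1..<n}. eu {0,1} (ustar u l) \<theta> (\<sigma>s l y))"
proof -
  define R where "R y \<alpha> \<longleftrightarrow> is_dist {1..n} \<alpha> \<and> (\<forall>\<theta>\<in>{1,2}. (\<Sum>l\<in>{1..<n}. \<sigma>s l y 1 * (u \<theta> (Suc l) - u \<theta> l)) \<le> eu {1..n} u \<theta> \<alpha>)" for y \<alpha>
  have ex: "\<exists>\<alpha>. R y \<alpha>" if y: "y \<in> profiles m Y" for y
    unfolding R_def
  proof (rule zono, intro ballI)
    fix l assume l: "l \<in> {1..<n}"
    then have "is_dist {0,1} (\<sigma>s l y)" using ropt_strat y unfolding strategies_def by blast
    then show "0 \<le> \<sigma>s l y 1 \<and> \<sigma>s l y 1 \<le> 1" by (rule dist01)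
  qed
  define \<sigma> where "\<sigma> y = (SOME \<alpha>. R y \<alpha>)" for y
  have R: "R y (\<sigma> y)" if "y \<in> profiles m Y" for y unfolding \<sigma>_def using ex[OF that] by (rule someI_ex)
  have "\<sigma> \<in> strategies {1..n} (profiles m Y)" unfolding strategies_def using R R_def by auto
  moreover have "\<forall>y\<in>profiles m Y. \<forall>\<theta>\<in>{1,2}. eu {1..n} u \<theta> (\<sigma> y) \<ge> (\<Sum>l\<in>{1..<n}. eu {0,1} (ustar u l) \<theta> (\<sigma>s l y))"
    using R unfolding R_def eu01 by auto
  ultimately show ?thesis by blast
qed

lemma cpl_ne: "couplings {1,2} m Y P \<noteq> {}" using Qs_coupling by auto

lemma fin_all: "\<forall>j<m. finite (Y j)" using finY by auto

lemma V1_le_Vrob: assumes l: "l \<in> {1..<n}" and j: "j < m"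
  shows "V1 {1,2} {0,1} (ustar u l) (Y j) (P j) \<le> Vrob {1,2} {0,1} (ustar u l) m Y P"
  unfolding V1_def
proof (rule cSUP_least)
  have mem: "(\<lambda>(y::'y) (a::nat). if a = 1 then 1 else (0::real)) \<in> {\<sigma>. \<forall>y\<in>Y j. is_dist {0,1} (\<sigma> y)}" unfolding is_dist_def by auto
  show "{\<sigma>::'y \<Rightarrow> nat \<Rightarrow> real. \<forall>y\<in>Y j. is_dist {0, 1} (\<sigma> y)} \<noteq> {}"
    unfolding is_dist_def by (auto intro!: exI[of _ "\<lambda>y (a::nat). if a = 1 then (1::real) else 0"])
  fix \<tau> :: "'y \<Rightarrow> nat \<Rightarrow> real" assume \<tau>: "\<tau> \<in> {\<sigma>::'y \<Rightarrow> nat \<Rightarrow> real. \<forall>y\<in>Y j. is_dist {0, 1} (\<sigma> y)}"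
  define \<sigma>' where "\<sigma>' y = \<tau> (y j)" for y
  have pj: "y j \<in> Y j" if "y \<in> profiles m Y" for y using that j unfolding profiles_def by (auto simp: PiE_iff)
  have s': "\<sigma>' \<in> strategies {0,1} (profiles m Y)" unfolding strategies_def \<sigma>'_def using \<tau> pj by auto
  define val where "val = (\<Sum>\<theta>\<in>{1, 2}. \<Sum>y\<in>Y j. P j \<theta> y * eu {0, 1} (ustar u l) \<theta> (\<tau> y))"
  have "val \<le> guarantee {1,2} {0,1} (ustar u l) m Y P \<sigma>'"
  proof (rule guarantee_ge[OF cpl_ne])
    fix Q assume Q: "Q \<in> couplings {1,2} m Y P"
    have finp: "finite (profiles m Y)" unfolding profiles_def using fin_all by (intro finite_PiE) auto
    have "payoff {1,2} {0,1} (ustar u l) (profiles m Y) Q \<sigma>' = val"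
      unfolding payoff_def val_def
    proof (rule sum.cong[OF refl])
      fix \<theta> :: nat assume th: "\<theta> \<in> {1,2}"
      have "(\<Sum>y\<in>profiles m Y. Q \<theta> y * eu {0, 1} (ustar u l) \<theta> (\<sigma>' y))
          = (\<Sum>c\<in>Y j. \<Sum>y\<in>{y \<in> profiles m Y. y j = c}. Q \<theta> y * eu {0, 1} (ustar u l) \<theta> (\<sigma>' y))"
        by (rule sum.group[symmetric]) (use finp finY[OF j] pj in auto)
      also have "\<dots> = (\<Sum>c\<in>Y j. (\<Sum>y\<in>{y \<in> profiles m Y. y j = c}. Q \<theta> y) * eu {0, 1} (ustar u l) \<theta> (\<tau> c))"
        unfolding \<sigma>'_def by (simp add: sum_distrib_right)
      also have "\<dots> = (\<Sum>c\<in>Y j. P j \<theta> c * eu {0, 1} (ustar u l) \<theta> (\<tau> c))"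
        using Q th j unfolding couplings_def by auto
      finally show "(\<Sum>y\<in>profiles m Y. Q \<theta> y * eu {0, 1} (ustar u l) \<theta> (\<sigma>' y)) = (\<Sum>c\<in>Y j. P j \<theta> c * eu {0, 1} (ustar u l) \<theta> (\<tau> c))" .
    qed
    then show "val \<le> payoff {1,2} {0,1} (ustar u l) (profiles m Y) Q \<sigma>'" by simp
  qed
  also have "\<dots> \<le> Vrob {1,2} {0,1} (ustar u l) m Y P"
    by (rule Vrob_ge[OF Qs_coupling s']) (use fin_all in auto)
  finally show "(\<Sum>\<theta>\<in>{1, 2}. \<Sum>y\<in>Y j. P j \<theta> y * eu {0, 1} (ustar u l) \<theta> (\<tau> y)) \<le> Vrob {1,2} {0,1} (ustar u l) m Y P"
    unfolding val_def .
qed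

lemma Vmax_le: assumes l: "l \<in> {1..<n}" shows "Vmax l \<le> Vrob {1,2} {0,1} (ustar u l) m Y P"
proof -
  have "Vmax l \<in> (\<lambda>j. V1 {1,2} {0,1} (ustar u l) (Y j) (P j)) ` {..<m}"
    unfolding Vmax_def by (rule Max_in) (use m in \<open>auto simp: lessThan_empty_iff\<close>)
  then obtain j where "j < m" "Vmax l = V1 {1,2} {0,1} (ustar u l) (Y j) (P j)" by auto
  then show ?thesis using V1_le_Vrob[OF l] by simp
qed

lemma lower:
  assumes \<sigma>: "\<sigma> \<in> strategies {1..n} (profiles m Y)"
    and dom: "\<forall>y\<in>profiles m Y. \<forall>\<theta>\<in>{1,2}. eu {1..n} u \<theta> (\<sigma> y) \<ge> (\<Sum>l\<in>{1..<n}. eu {0,1} (ustar u l) \<theta> (\<sigma>s l y))"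
  shows "(\<Sum>l\<in>{1..<n}. Vmax l) \<le> guarantee {1,2} {1..n} u m Y P \<sigma>"
proof (rule guarantee_ge[OF cpl_ne])
  fix Q assume Q: "Q \<in> couplings {1,2} m Y P"
  have Qnn: "0 \<le> Q \<theta> y" if "\<theta> \<in> {1,2}" "y \<in> profiles m Y" for \<theta> y
    using Q that unfolding couplings_def is_dist_def by blast
  have "(\<Sum>l\<in>{1..<n}. Vmax l) \<le> (\<Sum>l\<in>{1..<n}. Vrob {1,2} {0,1} (ustar u l) m Y P)"
    by (intro sum_mono Vmax_le)
  also have "\<dots> = (\<Sum>l\<in>{1..<n}. guarantee {1,2} {0,1} (ustar u l) m Y P (\<sigma>s l))"
    using ropt_val by simp
  also have "\<dots> \<le> (\<Sum>l\<in>{1..<n}. payoff {1,2} {0,1} (ustar u l) (profiles m Y) Q (\<sigma>s l))"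
    by (intro sum_mono guarantee_le[OF Q ropt_strat]) (use fin_all in auto)
  also have "\<dots> = (\<Sum>\<theta>\<in>{1,2}. \<Sum>y\<in>profiles m Y. Q \<theta> y * (\<Sum>l\<in>{1..<n}. eu {0,1} (ustar u l) \<theta> (\<sigma>s l y)))"
    unfolding payoff_def
  proof -
    have "(\<Sum>l\<in>{1..<n}. \<Sum>\<theta>\<in>{1,2}. \<Sum>y\<in>profiles m Y. Q \<theta> y * eu {0, 1} (ustar u l) \<theta> (\<sigma>s l y))
        = (\<Sum>\<theta>\<in>{1,2}. \<Sum>l\<in>{1..<n}. \<Sum>y\<in>profiles m Y. Q \<theta> y * eu {0, 1} (ustar u l) \<theta> (\<sigma>s l y))"
      by (rule sum.swap)
    also have "\<dots> = (\<Sum>\<theta>\<in>{1,2}. \<Sum>y\<in>profiles m Y. \<Sum>l\<in>{1..<n}. Q \<theta> y * eu {0, 1} (ustar u l) \<theta> (\<sigma>s l y))"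
      by (intro sum.cong refl) (rule sum.swap)
    also have "\<dots> = (\<Sum>\<theta>\<in>{1,2}. \<Sum>y\<in>profiles m Y. Q \<theta> y * (\<Sum>l\<in>{1..<n}. eu {0,1} (ustar u l) \<theta> (\<sigma>s l y)))"
      by (simp only: sum_distrib_left)
    finally show "(\<Sum>l\<in>{1..<n}. \<Sum>\<theta>\<in>{1,2}. \<Sum>y\<in>profiles m Y. Q \<theta> y * eu {0, 1} (ustar u l) \<theta> (\<sigma>s l y))
        = (\<Sum>\<theta>\<in>{1,2}. \<Sum>y\<in>profiles m Y. Q \<theta> y * (\<Sum>l\<in>{1..<n}. eu {0,1} (ustar u l) \<theta> (\<sigma>s l y)))" .
  qed
  also have "\<dots> \<le> (\<Sum>\<theta>\<in>{1,2}. \<Sum>y\<in>profiles m Y. Q \<theta> y * eu {1..n} u \<theta> (\<sigma> y))"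
    using dom Qnn by (intro sum_mono mult_left_mono) auto
  also have "\<dots> = payoff {1,2} {1..n} u (profiles m Y) Q \<sigma>" unfolding payoff_def ..
  finally show "(\<Sum>l\<in>{1..<n}. Vmax l) \<le> payoff {1,2} {1..n} u (profiles m Y) Q \<sigma>" .
qed

lemma main:
  "Vrob {1,2} {1..n} u m Y P =
           (\<Sum>l\<in>{1..<n}. Max ((\<lambda>j. V1 {1,2} {0,1} (ustar u l) (Y j) (P j)) ` {..<m}))
         \<and> (\<exists>\<sigma>\<in>strategies {1..n} (profiles m Y).
            \<forall>y\<in>profiles m Y. \<forall>\<theta>\<in>{1,2}.
              eu {1..n} u \<theta> (\<sigma> y) \<ge> (\<Sum>l\<in>{1..<n}. eu {0,1} (ustar u l) \<theta> (\<sigma>s l y)))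
         \<and> (\<forall>\<sigma>\<in>strategies {1..n} (profiles m Y).
            (\<forall>y\<in>profiles m Y. \<forall>\<theta>\<in>{1,2}.
              eu {1..n} u \<theta> (\<sigma> y) \<ge> (\<Sum>l\<in>{1..<n}. eu {0,1} (ustar u l) \<theta> (\<sigma>s l y)))
            \<longrightarrow> robustly_optimal {1,2} {1..n} u m Y P \<sigma>)"
proof -
  have key: "guarantee {1,2} {1..n} u m Y P \<sigma> = Vrob {1,2} {1..n} u m Y P \<and> Vrob {1,2} {1..n} u m Y P = (\<Sum>l\<in>{1..<n}. Vmax l)"
    if \<sigma>: "\<sigma> \<in> strategies {1..n} (profiles m Y)"
      and dom: "\<forall>y\<in>profiles m Y. \<forall>\<theta>\<in>{1,2}. eu {1..n} u \<theta> (\<sigma> y) \<ge> (\<Sum>l\<in>{1..<n}. eu {0,1} (ustar u l) \<theta> (\<sigma>s l y))" for \<sigma>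
  proof -
    have a: "(\<Sum>l\<in>{1..<n}. Vmax l) \<le> guarantee {1,2} {1..n} u m Y P \<sigma>" using lower[OF \<sigma> dom] .
    have b: "guarantee {1,2} {1..n} u m Y P \<sigma> \<le> Vrob {1,2} {1..n} u m Y P"
      by (rule Vrob_ge[OF Qs_coupling \<sigma>]) (use fin_all in auto)
    show ?thesis using a b upper by linarith
  qed
  obtain \<sigma>0 where s0: "\<sigma>0 \<in> strategies {1..n} (profiles m Y)"
    "\<forall>y\<in>profiles m Y. \<forall>\<theta>\<in>{1,2}. eu {1..n} u \<theta> (\<sigma>0 y) \<ge> (\<Sum>l\<in>{1..<n}. eu {0,1} (ustar u l) \<theta> (\<sigma>s l y))"
    using sigma_exists by blast
  have "Vrob {1,2} {1..n} u m Y P = (\<Sum>l\<in>{1..<n}. Vmax l)" using key[OF s0] by blast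
  then show ?thesis using sigma_exists key unfolding robustly_optimal_def Vmax_def by blast
qed

end

theorem theorem2:
  fixes u :: "nat \<Rightarrow> nat \<Rightarrow> real"
    and n m :: nat
    and Y :: "nat \<Rightarrow> 'y set"
    and P :: "nat \<Rightarrow> nat \<Rightarrow> 'y \<Rightarrow> real"
    and \<sigma>s :: "nat \<Rightarrow> (nat \<Rightarrow> 'y) \<Rightarrow> nat \<Rightarrow> real"
  assumes n: "n \<ge> 1" and m: "m \<ge> 1"
    and exps: "\<forall>j<m. is_experiment {1,2} (Y j) (P j)"
    and incr1: "\<forall>i\<in>{1..<n}. u 1 i < u 1 (Suc i)"
    and decr2: "\<forall>i\<in>{1..<n}. u 2 i > u 2 (Suc i)"
    and norm: "u 1 1 = 0" "u 2 1 = 0"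
    and undom: "\<forall>i\<in>{1..n}. \<not> weakly_star_dominated {1,2} {1..n} u i"
    and ropt: "\<forall>l\<in>{1..<n}. robustly_optimal {1,2} {0,1} (ustar u l) m Y P (\<sigma>s l)"
  shows "Vrob {1,2} {1..n} u m Y P =
           (\<Sum>l\<in>{1..<n}. Max ((\<lambda>j. V1 {1,2} {0,1} (ustar u l) (Y j) (P j)) ` {..<m}))
         \<and> (\<exists>\<sigma>\<in>strategies {1..n} (profiles m Y).
            \<forall>y\<in>profiles m Y. \<forall>\<theta>\<in>{1,2}.
              eu {1..n} u \<theta> (\<sigma> y) \<ge> (\<Sum>l\<in>{1..<n}. eu {0,1} (ustar u l) \<theta> (\<sigma>s l y)))
         \<and> (\<forall>\<sigma>\<in>strategies {1..n} (profiles m Y).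
            (\<forall>y\<in>profiles m Y. \<forall>\<theta>\<in>{1,2}.
              eu {1..n} u \<theta> (\<sigma> y) \<ge> (\<Sum>l\<in>{1..<n}. eu {0,1} (ustar u l) \<theta> (\<sigma>s l y)))
            \<longrightarrow> robustly_optimal {1,2} {1..n} u m Y P \<sigma>)"
proof -
  interpret thm2 u n m Y P \<sigma>s using assms by unfold_locales
  show ?thesis by (rule main)
qed


end
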